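(* Let $E$ be an sc-Banach space and $V=[0,\infty)^l\times\mathbb R^{n-l}\subset\mathbb R^n$. Let $f:\mathcal O(V\oplus E,0)\to(E,0)$ be an $\mathrm{sc}^0$-contraction germ which is of class $\mathrm{sc}^1$. Then the unique $\mathrm{sc}^0$-germ $\delta:\mathcal O(V,0)\to(E,0)$ satisfying $f(v,\delta(v))=0$ is also of class $\mathrm{sc}^1$.
   Context: An sc-Banach space is a Banach space $E$ with a nested sequence of Banach spaces $E=E_0\supset E_1\supset\cdots$ such that for $m<n$ the inclusion $E_n\to E_m$ is compact and $E_\infty=\bigcap_mE_m$ is dense in every $E_m$; $\|\cdot\|_m$ denotes the norm of $E_m$. Finite-dimensional spaces carry the constant structure, direct sums the levelwise one. For a closed subset $C$ of an sc-Banach space $E$, $C_m=C\cap E_m$; a germ of neighborhoods $\mathcal O(C,0)$ is a decreasing sequence $U_0\supset U_1\supset\cdots$ with $U_m$ a relatively open neighborhood of $0$ in $C_m$. An $\mathrm{sc}^0$-germ $f:\mathcal O(C,0)\to(F,0)$ is a continuous $f:U_0\to F_0$ with $f(0)=0$, $f(U_m)\subset F_m$ and $f:U_m\to F_m$ continuous for all $m$. The tangent germ $T\mathcal O(C,0)$ is the sequence $(U_{m+1}\oplus E_m)_{m\ge0}$ in the sc-Banach space $TE=E_1\oplus E_0$ with levels $(TE)_m=E_{m+1}\oplus E_m$. An $\mathrm{sc}^0$-germ $f$ is of class $\mathrm{sc}^1$ if for every $x\in U_1$ there is $Df(x)\in\mathcal L(E_0,F_0)$ with $\|f(x+h)-f(x)-Df(x)h\|_0/\|h\|_1\to0$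 as $\|h\|_1\to0$ ($x+h\in U_1$), and the tangent map $Tf(x,h)=(f(x),Df(x)h)$ maps $U_{m+1}\oplus E_m$ into $F_{m+1}\oplus F_m$ and is an $\mathrm{sc}^0$-germ $T\mathcal O(C,0)\to(TF,0)$. An $\mathrm{sc}^0$-contraction germ is an $\mathrm{sc}^0$-germ $f:\mathcal O(V\oplus E,0)\to(E,0)$ of the form $f(v,u)=u-B(v,u)$ such that for every $m\ge0$ and every $0<\varepsilon<1$, $\|B(v,u)-B(v,u')\|_m\le\varepsilon\|u-u'\|_m$ for all $(v,u),(v,u')$ sufficiently close to $(0,0)$ in $V\oplus E_m$ (closeness depending on $m,\varepsilon$). Such a germ has a unique $\mathrm{sc}^0$-solution germ $\delta$ with $f(v,\delta(v))=0$. *)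

theory Defs
  imports "HOL-Analysis.Analysis"
begin

text \<open>A graded (leveled) structure on a real vector space type is a pair (L, N):
  L m is the level-m subspace E_m and N m is its norm.\<close>

definition level_norm :: "'a::real_vector set \<Rightarrow> ('a \<Rightarrow> real) \<Rightarrow> bool" where
  "level_norm S n \<longleftrightarrow>
     0 \<in> S \<and> (\<forall>x\<in>S. \<forall>y\<in>S. x + y \<in> S) \<and> (\<forall>c. \<forall>x\<in>S. c *\<^sub>R x \<in> S) \<and>
     (\<forall>x\<in>S. 0 \<le> n x \<and> (n x = 0 \<longleftrightarrow> x = 0)) \<and>
     (\<forall>c. \<forall>x\<in>S. n (c *\<^sub>R x) = \<bar>c\<bar> * n x) \<and>
     (\<forall>x\<in>S. \<forall>y\<in>S. n (x + y) \<le> n x + n y)"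

definition level_complete :: "'a::real_vector set \<Rightarrow> ('a \<Rightarrow> real) \<Rightarrow> bool" where
  "level_complete S n \<longleftrightarrow>
     (\<forall>x :: nat \<Rightarrow> 'a. (\<forall>k. x k \<in> S) \<and>
        (\<forall>e>0. \<exists>K. \<forall>i\<ge>K. \<forall>j\<ge>K. n (x i - x j) < e) \<longrightarrow>
        (\<exists>y\<in>S. (\<lambda>k. n (x k - y)) \<longlonglongrightarrow> 0))"

definition sc_banach :: "(nat \<Rightarrow> 'a::banach set) \<Rightarrow> (nat \<Rightarrow> 'a \<Rightarrow> real) \<Rightarrow> bool" where
  "sc_banach L N \<longleftrightarrow>
     L 0 = UNIV \<and> (\<forall>x. N 0 x = norm x) \<and>
     (\<forall>m. L (Suc m) \<subseteq> L m) \<and>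
     (\<forall>m. level_norm (L m) (N m) \<and> level_complete (L m) (N m)) \<and>
     \<comment> \<open>compactness of the inclusions E_n \<rightarrow> E_m, m < n\<close>
     (\<forall>m n. m < n \<longrightarrow>
        (\<forall>x :: nat \<Rightarrow> 'a. (\<forall>k. x k \<in> L n) \<and> (\<exists>B. \<forall>k. N n (x k) \<le> B) \<longrightarrow>
           (\<exists>r y. strict_mono r \<and> y \<in> L m \<and> (\<lambda>k. N m (x (r k) - y)) \<longlonglongrightarrow> 0))) \<and>
     \<comment> \<open>density of E_\<infinity> in every E_m\<close>
     (\<forall>m. \<forall>x\<in>L m. \<forall>e>0. \<exists>y\<in>(\<Inter>k. L k). N m (x - y) < e)"

definition const_levels :: "nat \<Rightarrow> 'a set" where "const_levels m = UNIV"
definition const_norms :: "nat \<Rightarrow> 'a::real_normed_vector \<Rightarrow> real" where "const_norms m = norm"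

definition sum_levels :: "(nat \<Rightarrow> 'a set) \<Rightarrow> (nat \<Rightarrow> 'b set) \<Rightarrow> nat \<Rightarrow> ('a \<times> 'b) set" where
  "sum_levels LA LB m = LA m \<times> LB m"
definition sum_norms :: "(nat \<Rightarrow> 'a \<Rightarrow> real) \<Rightarrow> (nat \<Rightarrow> 'b \<Rightarrow> real) \<Rightarrow> nat \<Rightarrow> 'a \<times> 'b \<Rightarrow> real" where
  "sum_norms NA NB m p = sqrt ((NA m (fst p))\<^sup>2 + (NB m (snd p))\<^sup>2)"

definition tan_levels :: "(nat \<Rightarrow> 'a set) \<Rightarrow> nat \<Rightarrow> ('a \<times> 'a) set" where
  "tan_levels L m = L (Suc m) \<times> L m"
definition tan_norms :: "(nat \<Rightarrow> 'a \<Rightarrow> real) \<Rightarrow> nat \<Rightarrow> 'a \<times> 'a \<Rightarrow> real" where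
  "tan_norms N m p = sqrt ((N (Suc m) (fst p))\<^sup>2 + (N m (snd p))\<^sup>2)"

definition nbhd_germ :: "(nat \<Rightarrow> 'a::real_vector set) \<Rightarrow> (nat \<Rightarrow> 'a \<Rightarrow> real) \<Rightarrow> 'a set \<Rightarrow> (nat \<Rightarrow> 'a set) \<Rightarrow> bool" where
  "nbhd_germ LA NA C U \<longleftrightarrow>
     (\<forall>m. U (Suc m) \<subseteq> U m) \<and>
     (\<forall>m. U m \<subseteq> C \<inter> LA m \<and> 0 \<in> U m \<and>
        (\<forall>x\<in>U m. \<exists>e>0. \<forall>y\<in>C \<inter> LA m. NA m (y - x) < e \<longrightarrow> y \<in> U m))"

definition sc0_map :: "(nat \<Rightarrow> 'a::real_vector \<Rightarrow> real) \<Rightarrow> (nat \<Rightarrow> 'a set) \<Rightarrow>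
     (nat \<Rightarrow> 'b::real_vector set) \<Rightarrow> (nat \<Rightarrow> 'b \<Rightarrow> real) \<Rightarrow> ('a \<Rightarrow> 'b) \<Rightarrow> bool" where
  "sc0_map NA U LF NF f \<longleftrightarrow>
     f 0 = 0 \<and>
     (\<forall>m. f ` U m \<subseteq> LF m) \<and>
     (\<forall>m. \<forall>x\<in>U m. \<forall>e>0. \<exists>d>0. \<forall>y\<in>U m. NA m (y - x) < d \<longrightarrow> NF m (f y - f x) < e)"

definition sc0_germ :: "(nat \<Rightarrow> 'a::real_vector set) \<Rightarrow> (nat \<Rightarrow> 'a \<Rightarrow> real) \<Rightarrow> 'a set \<Rightarrow> (nat \<Rightarrow> 'a set) \<Rightarrow>
     (nat \<Rightarrow> 'b::real_vector set) \<Rightarrow> (nat \<Rightarrow> 'b \<Rightarrow> real) \<Rightarrow> ('a \<Rightarrow> 'b) \<Rightarrow> bool" where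
  "sc0_germ LA NA C U LF NF f \<longleftrightarrow> nbhd_germ LA NA C U \<and> sc0_map NA U LF NF f"

definition sc1_germ :: "(nat \<Rightarrow> 'a::real_normed_vector set) \<Rightarrow> (nat \<Rightarrow> 'a \<Rightarrow> real) \<Rightarrow> 'a set \<Rightarrow> (nat \<Rightarrow> 'a set) \<Rightarrow>
     (nat \<Rightarrow> 'b::real_normed_vector set) \<Rightarrow> (nat \<Rightarrow> 'b \<Rightarrow> real) \<Rightarrow> ('a \<Rightarrow> 'b) \<Rightarrow> bool" where
  "sc1_germ LA NA C U LF NF f \<longleftrightarrow>
     sc0_germ LA NA C U LF NF f \<and>
     (\<exists>Df :: 'a \<Rightarrow> 'a \<Rightarrow> 'b.
        (\<forall>x\<in>U 1. bounded_linear (Df x) \<and>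
           (\<forall>e>0. \<exists>d>0. \<forall>h. x + h \<in> U 1 \<and> 0 < NA 1 h \<and> NA 1 h < d \<longrightarrow>
               norm (f (x + h) - f x - Df x h) \<le> e * NA 1 h)) \<and>
        (\<forall>m. (\<lambda>(x, h). (f x, Df x h)) ` (U (Suc m) \<times> LA m) \<subseteq> tan_levels LF m) \<and>
        sc0_map (tan_norms NA) (\<lambda>m. U (Suc m) \<times> LA m) (tan_levels LF) (tan_norms NF)
           (\<lambda>(x, h). (f x, Df x h)))"

text \<open>sc^0-contraction germ f(v,u) = u - B(v,u) on O(V \<oplus> E, 0).\<close>
definition sc0_contraction_germ ::
  "'v::real_normed_vector set \<Rightarrow> (nat \<Rightarrow> 'e::banach set) \<Rightarrow> (nat \<Rightarrow> 'e \<Rightarrow> real) \<Rightarrow>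
   (nat \<Rightarrow> ('v \<times> 'e) set) \<Rightarrow> ('v \<times> 'e \<Rightarrow> 'e) \<Rightarrow> bool" where
  "sc0_contraction_germ V L N U f \<longleftrightarrow>
     sc0_germ (sum_levels const_levels L) (sum_norms const_norms N) (V \<times> UNIV) U L N f \<and>
     (\<forall>m. \<forall>e. 0 < e \<and> e < 1 \<longrightarrow>
        (\<exists>r>0. \<forall>v u u'. (v, u) \<in> U m \<and> (v, u') \<in> U m \<and>
            sum_norms const_norms N m (v, u) < r \<and> sum_norms const_norms N m (v, u') < r \<longrightarrow>
            N m ((u - f (v, u)) - (u' - f (v, u'))) \<le> e * N m (u - u')))"

text \<open>The partial quadrant [0,\<infinity>)^l \<times> \<real>^(n-l), the nonnegative coordinates being those in I.\<close>
definition quadrant :: "'n::finite set \<Rightarrow> (real ^ 'n) set" where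
  "quadrant I = {v. \<forall>i\<in>I. 0 \<le> v $ i}"

end

theory Submission
  imports Defs "HOL-Analysis.Analysis"
begin



lemma ln_0: assumes "level_norm S n" shows "n 0 = 0" "0 \<in> S"
  using assms unfolding level_norm_def by auto

lemma ln_add: assumes "level_norm S n" "x \<in> S" "y \<in> S" shows "x + y \<in> S"
  using assms unfolding level_norm_def by auto

lemma ln_scale: assumes "level_norm S n" "x \<in> S" shows "c *\<^sub>R x \<in> S" "n (c *\<^sub>R x) = \<bar>c\<bar> * n x"
  using assms unfolding level_norm_def by auto

lemma ln_neg: assumes "level_norm S n" "x \<in> S" shows "- x \<in> S" "n (- x) = n x"
  using ln_scale[OF assms, of "-1"] by auto

lemma ln_diff: assumes "level_norm S n" "x \<in> S" "y \<in> S" shows "x - y \<in> S"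
  using ln_add[OF assms(1) assms(2) ln_neg(1)[OF assms(1,3)]] by simp

lemma ln_nonneg: assumes "level_norm S n" "x \<in> S" shows "0 \<le> n x"
  using assms unfolding level_norm_def by auto

lemma ln_zero_iff: assumes "level_norm S n" "x \<in> S" shows "n x = 0 \<longleftrightarrow> x = 0"
  using assms unfolding level_norm_def by auto

lemma ln_tri: assumes "level_norm S n" "x \<in> S" "y \<in> S" shows "n (x + y) \<le> n x + n y"
  using assms unfolding level_norm_def by auto

lemma ln_tri_diff: assumes "level_norm S n" "x \<in> S" "y \<in> S" shows "n (x - y) \<le> n x + n y"
  using ln_tri[OF assms(1,2) ln_neg(1)[OF assms(1,3)]] ln_neg(2)[OF assms(1,3)] by simp

lemma ln_sym: assumes "level_norm S n" "x \<in> S" "y \<in> S" shows "n (x - y) = n (y - x)"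
  using ln_neg(2)[OF assms(1) ln_diff[OF assms]] by simp

lemma ln_tri3: assumes "level_norm S n" "x \<in> S" "y \<in> S" "z \<in> S" shows "n (x - z) \<le> n (x - y) + n (y - z)"
  using ln_tri[OF assms(1) ln_diff[OF assms(1,2,3)] ln_diff[OF assms(1,3,4)]] by simp

lemma ln_sum: assumes "level_norm S n" "finite A" "\<And>i. i \<in> A \<Longrightarrow> a i \<in> S"
  shows "sum a A \<in> S \<and> n (sum a A) \<le> (\<Sum>i\<in>A. n (a i))"
  using assms(2,3)
proof (induction A rule: finite_induct)
  case empty thus ?case using ln_0[OF assms(1)] by simp
next
  case (insert x F)
  then show ?case using ln_add[OF assms(1)] ln_tri[OF assms(1), of "a x" "sum a F"] by fastforce
qed




locale S23 =
  fixes L :: "nat \<Rightarrow> 'e::banach set" and N :: "nat \<Rightarrow> 'e \<Rightarrow> real"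
    and I :: "'n::finite set"
    and U :: "nat \<Rightarrow> ((real ^ 'n) \<times> 'e) set" and f :: "(real ^ 'n) \<times> 'e \<Rightarrow> 'e"
    and W :: "nat \<Rightarrow> (real ^ 'n) set" and \<delta> :: "real ^ 'n \<Rightarrow> 'e"
  assumes scb: "sc_banach L N"
    and contr: "sc0_contraction_germ (quadrant I) L N U f"
    and sc1f: "sc1_germ (sum_levels const_levels L) (sum_norms const_norms N) (quadrant I \<times> UNIV) U L N f"
    and dgerm: "sc0_germ const_levels const_norms (quadrant I) W L N \<delta>"
    and sol: "\<forall>v\<in>W 0. (v, \<delta> v) \<in> U 0 \<and> f (v, \<delta> v) = 0"
begin

abbreviation "Q \<equiv> quadrant I"
abbreviation "NA \<equiv> sum_norms const_norms N"

lemma NA_eq: "NA m (v,u) = sqrt ((norm v)\<^sup>2 + (N m u)\<^sup>2)"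
  by (simp add: sum_norms_def const_norms_def)

lemma L0: "L 0 = UNIV" and N0: "N 0 x = norm x"
  using scb unfolding sc_banach_def by auto

lemma LSuc: "L (Suc m) \<subseteq> L m" using scb unfolding sc_banach_def by auto

lemma Lmono: "m \<le> n \<Longrightarrow> L n \<subseteq> L m"
  by (induction n rule: dec_induct) (use LSuc in auto)

lemma lnorm: "level_norm (L m) (N m)" using scb unfolding sc_banach_def by auto
lemma lcomp: "level_complete (L m) (N m)" using scb unfolding sc_banach_def by auto
lemma lcompact0: "\<forall>m n. m < n \<longrightarrow>
        (\<forall>x :: nat \<Rightarrow> 'e. (\<forall>k. x k \<in> L n) \<and> (\<exists>B. \<forall>k. N n (x k) \<le> B) \<longrightarrow>
           (\<exists>r y. strict_mono r \<and> y \<in> L m \<and> (\<lambda>k. N m (x (r k) - y)) \<longlonglongrightarrow> 0))"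
  using scb unfolding sc_banach_def by (elim conjE) assumption
lemma lcompact: fixes x :: "nat \<Rightarrow> 'e" assumes "m < n" "\<forall>k. x k \<in> L n" "\<forall>k. N n (x k) \<le> B"
  shows "\<exists>r y. strict_mono r \<and> y \<in> L m \<and> (\<lambda>k. N m (x (r k) - y)) \<longlonglongrightarrow> 0"
proof -
  have h: "(\<forall>k. x k \<in> L n) \<and> (\<exists>B. \<forall>k. N n (x k) \<le> B)" using assms(2,3) by blast
  show ?thesis by (rule lcompact0[rule_format, OF assms(1) h])
qed
lemma ldense0: "\<forall>m. \<forall>x\<in>L m. \<forall>e>0. \<exists>y\<in>(\<Inter>k. L k). N m (x - y) < e"
  using scb unfolding sc_banach_def by (elim conjE) assumption
lemma ldense: "x \<in> L m \<Longrightarrow> e > 0 \<Longrightarrow> \<exists>y\<in>(\<Inter>k. L k). N m (x - y) < e"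
  using ldense0[rule_format] by blast

lemma quadrant_convex: "convex Q"
  unfolding convex_def
proof (intro ballI allI impI)
  fix x y :: "real^'n" and u v :: real
  assume "x \<in> Q" "y \<in> Q" and uv: "0 \<le> u" "0 \<le> v" "u + v = 1"
  hence "\<forall>i\<in>I. 0 \<le> x $ i" "\<forall>i\<in>I. 0 \<le> y $ i" by (auto simp: quadrant_def)
  thus "u *\<^sub>R x + v *\<^sub>R y \<in> Q" using uv by (simp add: quadrant_def)
qed

lemma incl_bound: "\<exists>C>0. \<forall>x\<in>L m. norm x \<le> C * N m x"
proof (cases m)
  case 0 thus ?thesis by (intro exI[of _ 1]) (auto simp: N0)
next
  case (Suc m')
  show ?thesis
  proof (rule ccontr)
    assume nC: "\<not> ?thesis"
    hence "\<forall>k::nat. \<exists>x\<in>L m. norm x > (real k + 1) * N m x"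
    proof (intro allI)
      fix k :: nat
      have "real k + 1 > 0" by simp
      thus "\<exists>x\<in>L m. norm x > (real k + 1) * N m x" using nC not_le by blast
    qed
    then obtain x where x: "\<And>k. x k \<in> L m" "\<And>k. norm (x k) > (real k + 1) * N m (x k)"
      by metis
    have xn: "N m (x k) > 0" for k
    proof -
      have "x k \<noteq> 0" using x(2)[of k] ln_0[OF lnorm] by (auto simp: N0)
      thus ?thesis using ln_nonneg[OF lnorm x(1)[of k]] ln_zero_iff[OF lnorm x(1)[of k]] by force
    qed
    define y where "y k = (1 / N m (x k)) *\<^sub>R x k" for k
    have yL: "y k \<in> L m" for k using ln_scale[OF lnorm x(1)] by (simp add: y_def)
    have yN: "N m (y k) = 1" for k using ln_scale(2)[OF lnorm x(1)[of k], of "1 / N m (x k)"] xn[of k] by (simp add: y_def)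
    have yb: "norm (y k) > real k + 1" for k
    proof -
      have "norm (y k) = norm (x k) / N m (x k)" using xn[of k] by (simp add: y_def)
      also have "\<dots> > real k + 1" using x(2)[of k] xn[of k] by (simp add: field_simps)
      finally show ?thesis .
    qed
    obtain r y0 where r: "strict_mono r" "(\<lambda>k. N 0 (y (r k) - y0)) \<longlonglongrightarrow> 0"
      using lcompact[of 0 m y 1] Suc yL yN by auto
    hence "(\<lambda>k. norm (y (r k) - y0)) \<longlonglongrightarrow> 0" by (simp add: N0)
    from LIMSEQ_D[OF this, of 1] obtain K where "\<forall>n\<ge>K. norm (norm (y (r n) - y0) - 0) < 1" by auto
    hence K: "\<And>k. k \<ge> K \<Longrightarrow> norm (y (r k) - y0) < 1" by simp
    obtain k0 :: nat where "real k0 \<ge> norm y0" using real_arch_simple by blast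
    define k where "k = max K k0"
    have k: "k \<ge> K" "real k \<ge> norm y0" using \<open>real k0 \<ge> norm y0\<close> by (auto simp: k_def)
    have "norm (y (r k)) < norm y0 + 1" using K[OF k(1)] norm_triangle_sub[of "y (r k)" y0] by linarith
    moreover have "real (r k) \<ge> real k" using seq_suble[OF r(1)] by simp
    ultimately show False using yb[of "r k"] k(2) by linarith
  qed
qed

end



context S23 begin

lemma sqrt_le_add: "0 \<le> a \<Longrightarrow> 0 \<le> b \<Longrightarrow> sqrt (a\<^sup>2 + b\<^sup>2) \<le> a + b"
  by (rule real_le_lsqrt) (auto simp: power2_eq_square algebra_simps)

lemma le_sqrt2: "0 \<le> b \<Longrightarrow> b \<le> sqrt (a\<^sup>2 + b\<^sup>2)"
  by (rule real_le_rsqrt) simp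

lemma le_sqrt1: "0 \<le> a \<Longrightarrow> a \<le> sqrt (a\<^sup>2 + b\<^sup>2)"
  by (rule real_le_rsqrt) simp

lemma U_germ: "nbhd_germ (sum_levels const_levels L) NA (Q \<times> UNIV) U"
  and f_sc0: "sc0_map NA U L N f"
  using contr unfolding sc0_contraction_germ_def sc0_germ_def by auto

lemma sumlev: "sum_levels const_levels L m = UNIV \<times> L m"
  by (auto simp: sum_levels_def const_levels_def)

lemma U_Suc: "U (Suc m) \<subseteq> U m" using U_germ unfolding nbhd_germ_def by blast
lemma U_mono: "m \<le> n \<Longrightarrow> U n \<subseteq> U m"
  by (induction n rule: dec_induct) (use U_Suc in auto)
lemma U_sub: "U m \<subseteq> (Q \<times> UNIV) \<inter> (UNIV \<times> L m)" using U_germ unfolding nbhd_germ_def sumlev by blast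
lemma U_0: "0 \<in> U m" using U_germ unfolding nbhd_germ_def by blast
lemma U_open: "x \<in> U m \<Longrightarrow> \<exists>e>0. \<forall>y\<in>(Q \<times> UNIV) \<inter> (UNIV \<times> L m). NA m (y - x) < e \<longrightarrow> y \<in> U m"
  using U_germ unfolding nbhd_germ_def sumlev by blast
lemma f0: "f 0 = 0" using f_sc0 unfolding sc0_map_def by blast
lemma fL: "q \<in> U m \<Longrightarrow> f q \<in> L m" using f_sc0 unfolding sc0_map_def by blast

lemma contr_ex: "\<exists>r>0. \<forall>v u u'. (v, u) \<in> U m \<and> (v, u') \<in> U m \<and> NA m (v, u) < r \<and> NA m (v, u') < r \<longrightarrow>
            N m ((u - f (v, u)) - (u' - f (v, u'))) \<le> (1/2) * N m (u - u')"
proof -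
  have "\<forall>m. \<forall>e. 0 < e \<and> e < 1 \<longrightarrow>
        (\<exists>r>0. \<forall>v u u'. (v, u) \<in> U m \<and> (v, u') \<in> U m \<and>
            NA m (v, u) < r \<and> NA m (v, u') < r \<longrightarrow>
            N m ((u - f (v, u)) - (u' - f (v, u'))) \<le> e * N m (u - u'))"
    using contr unfolding sc0_contraction_germ_def by (elim conjE) assumption
  from this[rule_format, of "1/2" m] show ?thesis by simp
qed

definition r where "r m = (SOME r. r > 0 \<and> (\<forall>v u u'. (v, u) \<in> U m \<and> (v, u') \<in> U m \<and> NA m (v, u) < r \<and> NA m (v, u') < r \<longrightarrow>
            N m ((u - f (v, u)) - (u' - f (v, u'))) \<le> (1/2) * N m (u - u')))"

lemma r_pos: "r m > 0" and r_contr: "(v, u) \<in> U m \<Longrightarrow> (v, u') \<in> U m \<Longrightarrow> NA m (v, u) < r m \<Longrightarrow> NA m (v, u') < r m \<Longrightarrow>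
            N m ((u - f (v, u)) - (u' - f (v, u'))) \<le> (1/2) * N m (u - u')"
  using someI_ex[OF contr_ex[of m]] unfolding r_def[symmetric] by blast+

abbreviation "DfP Df \<equiv> (\<forall>x\<in>U 1. bounded_linear (Df x) \<and>
           (\<forall>e>0. \<exists>d>0. \<forall>h. x + h \<in> U 1 \<and> 0 < NA 1 h \<and> NA 1 h < d \<longrightarrow>
               norm (f (x + h) - f x - Df x h) \<le> e * NA 1 h)) \<and>
        (\<forall>m. (\<lambda>(x, h). (f x, Df x h)) ` (U (Suc m) \<times> sum_levels const_levels L m) \<subseteq> tan_levels L m) \<and>
        sc0_map (tan_norms NA) (\<lambda>m. U (Suc m) \<times> sum_levels const_levels L m) (tan_levels L) (tan_norms N)
           (\<lambda>(x, h). (f x, Df x h))"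

lemma Df_ex: "\<exists>Df. DfP Df"
  using sc1f unfolding sc1_germ_def by (elim conjE) assumption

definition Df where "Df = (SOME Df. DfP Df)"

lemma Df_spec: "DfP Df"
  unfolding Df_def by (rule someI_ex[OF Df_ex])

lemma Df_specA: "\<forall>x\<in>U 1. bounded_linear (Df x) \<and>
           (\<forall>e>0. \<exists>d>0. \<forall>h. x + h \<in> U 1 \<and> 0 < NA 1 h \<and> NA 1 h < d \<longrightarrow>
               norm (f (x + h) - f x - Df x h) \<le> e * NA 1 h)"
  using Df_spec by (rule conjunct1)
lemma Df_specB: "\<forall>m. (\<lambda>(x, h). (f x, Df x h)) ` (U (Suc m) \<times> sum_levels const_levels L m) \<subseteq> tan_levels L m"
  using Df_spec[THEN conjunct2] by (rule conjunct1)
lemma Df_specC: "sc0_map (tan_norms NA) (\<lambda>m. U (Suc m) \<times> sum_levels const_levels L m) (tan_levels L) (tan_norms N)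
           (\<lambda>(x, h). (f x, Df x h))"
  using Df_spec[THEN conjunct2] by (rule conjunct2)

lemma Df_lin: "q \<in> U 1 \<Longrightarrow> bounded_linear (Df q)"
  using Df_specA by simp

lemma Df_deriv: "q \<in> U 1 \<Longrightarrow> e > 0 \<Longrightarrow> \<exists>d>0. \<forall>h. q + h \<in> U 1 \<and> 0 < NA 1 h \<and> NA 1 h < d \<longrightarrow>
               norm (f (q + h) - f q - Df q h) \<le> e * NA 1 h"
  using Df_specA by simp

lemma Df_L: "q \<in> U (Suc m) \<Longrightarrow> snd w \<in> L m \<Longrightarrow> Df q w \<in> L m"
proof -
  assume a: "q \<in> U (Suc m)" "snd w \<in> L m"
  have mem: "(q, w) \<in> U (Suc m) \<times> sum_levels const_levels L m" using a by (cases w) (simp add: sumlev)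
  have "(\<lambda>(x, h). (f x, Df x h)) (q, w) \<in> tan_levels L m"
    by (rule subsetD[OF Df_specB[rule_format, of m] imageI[OF mem]])
  thus ?thesis by (simp add: tan_levels_def)
qed

lemma Df_cont: assumes "q \<in> U (Suc m)" "snd w \<in> L m" "e > 0"
  shows "\<exists>d>0. \<forall>q' w'. q' \<in> U (Suc m) \<and> snd w' \<in> L m \<and> NA (Suc m) (q' - q) + NA m (w' - w) < d \<longrightarrow>
     N m (Df q' w' - Df q w) < e"
proof -
  have mem: "(q, w) \<in> U (Suc m) \<times> sum_levels const_levels L m" using assms by (cases w) (simp add: sumlev)
  have "\<forall>m. \<forall>x\<in>U (Suc m) \<times> sum_levels const_levels L m. \<forall>e>0. \<exists>d>0. \<forall>y\<in>U (Suc m) \<times> sum_levels const_levels L m.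
     tan_norms NA m (y - x) < d \<longrightarrow> tan_norms N m ((\<lambda>(x, h). (f x, Df x h)) y - (\<lambda>(x, h). (f x, Df x h)) x) < e"
    using Df_specC unfolding sc0_map_def by (elim conjE) assumption
  from this[rule_format, OF mem assms(3)] obtain d where d1: "d > 0" and
    d2: "\<forall>y\<in>U (Suc m) \<times> sum_levels const_levels L m. tan_norms NA m (y - (q, w)) < d \<longrightarrow>
        tan_norms N m ((\<lambda>(x, h). (f x, Df x h)) y - (\<lambda>(x, h). (f x, Df x h)) (q, w)) < e"
    by (elim exE conjE)
  show ?thesis
  proof (intro exI[of _ d] conjI allI impI d1)
    fix q' w' assume h: "q' \<in> U (Suc m) \<and> snd w' \<in> L m \<and> NA (Suc m) (q' - q) + NA m (w' - w) < d"
    have mem': "(q', w') \<in> U (Suc m) \<times> sum_levels const_levels L m" using h by (cases w') (simp add: sumlev)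
    have nn: "0 \<le> NA k z" for k z by (simp add: sum_norms_def)
    have "tan_norms NA m ((q', w') - (q, w)) \<le> NA (Suc m) (q' - q) + NA m (w' - w)"
      unfolding tan_norms_def using sqrt_le_add[OF nn nn] by simp
    hence "tan_norms NA m ((q', w') - (q, w)) < d" using h by linarith
    from d2[rule_format, OF mem' this] have lt: "tan_norms N m ((f q', Df q' w') - (f q, Df q w)) < e" by simp
    have "Df q' w' \<in> L m" using Df_L h by blast
    hence "Df q' w' - Df q w \<in> L m" using Df_L[OF assms(1,2)] ln_diff[OF lnorm] by blast
    hence "N m (Df q' w' - Df q w) \<le> tan_norms N m ((f q', Df q' w') - (f q, Df q w))"
      unfolding tan_norms_def using le_sqrt2 ln_nonneg[OF lnorm] by simp
    thus "N m (Df q' w' - Df q w) < e" using lt by linarith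
  qed
qed

lemma W_germ: "nbhd_germ const_levels const_norms Q W" and d_sc0: "sc0_map const_norms W L N \<delta>"
  using dgerm unfolding sc0_germ_def by auto

lemma W_all: "\<forall>m. W m \<subseteq> Q \<inter> UNIV \<and> 0 \<in> W m \<and> (\<forall>x\<in>W m. \<exists>e>0. \<forall>y\<in>Q \<inter> UNIV. norm (y - x) < e \<longrightarrow> y \<in> W m)"
  using W_germ unfolding nbhd_germ_def const_levels_def const_norms_def by (elim conjE) assumption
lemma W_Suc: "W (Suc m) \<subseteq> W m" using W_germ unfolding nbhd_germ_def by (elim conjE) simp
lemma W_mono: "m \<le> n \<Longrightarrow> W n \<subseteq> W m"
  by (induction n rule: dec_induct) (use W_Suc in auto)
lemma W_sub: "W m \<subseteq> Q" using W_all by simp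
lemma W_0: "0 \<in> W m" using W_all by simp
lemma W_open: "x \<in> W m \<Longrightarrow> \<exists>e>0. \<forall>y\<in>Q. norm (y - x) < e \<longrightarrow> y \<in> W m"
  using W_all by simp
lemma d_all: "\<delta> 0 = 0 \<and> (\<forall>m. \<delta> ` W m \<subseteq> L m) \<and>
     (\<forall>m. \<forall>x\<in>W m. \<forall>e>0. \<exists>d>0. \<forall>y\<in>W m. norm (y - x) < d \<longrightarrow> N m (\<delta> y - \<delta> x) < e)"
  using d_sc0 unfolding sc0_map_def const_norms_def .
lemma d0: "\<delta> 0 = 0" using d_all by simp
lemma dL: "x \<in> W m \<Longrightarrow> \<delta> x \<in> L m" using d_all by blast
lemma d_cont: "x \<in> W m \<Longrightarrow> e > 0 \<Longrightarrow> \<exists>d>0. \<forall>y\<in>W m. norm (y - x) < d \<longrightarrow> N m (\<delta> y - \<delta> x) < e"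
  using d_all by simp

end



lemma sqrt_shift: "0 \<le> X \<Longrightarrow> 0 \<le> a \<Longrightarrow> 0 \<le> t \<Longrightarrow> sqrt (X + (a + t)\<^sup>2) \<le> sqrt (X + a\<^sup>2) + t"
proof (rule real_le_lsqrt)
  assume h: "0 \<le> X" "0 \<le> a" "0 \<le> t"
  have "a \<le> sqrt (X + a\<^sup>2)" by (rule real_le_rsqrt) (use h in simp)
  hence "2 * a * t \<le> 2 * sqrt (X + a\<^sup>2) * t" using h by (simp add: mult_right_mono)
  moreover have "(sqrt (X + a\<^sup>2) + t)\<^sup>2 = X + a\<^sup>2 + 2 * sqrt (X + a\<^sup>2) * t + t\<^sup>2"
    using h by (simp add: power2_eq_square algebra_simps)
  ultimately show "X + (a + t)\<^sup>2 \<le> (sqrt (X + a\<^sup>2) + t)\<^sup>2" by (simp add: power2_eq_square algebra_simps)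
qed (auto)

lemma small_eps: fixes a b c :: real assumes "\<And>e. e > 0 \<Longrightarrow> a \<le> b + c * e" shows "a \<le> b"
proof (rule ccontr)
  assume "\<not> a \<le> b"
  define e where "e = (a - b) / (2 * (\<bar>c\<bar> + 1))"
  have ep: "e > 0" using \<open>\<not> a \<le> b\<close> by (simp add: e_def)
  have "c * e \<le> (\<bar>c\<bar> + 1) * e" using ep by (intro mult_right_mono) auto
  also have "\<dots> = (a - b) / 2" unfolding e_def by (simp add: field_simps)
  finally have "a \<le> b + (a - b) / 2" using assms[OF ep] by linarith
  thus False using \<open>\<not> a \<le> b\<close> by (simp add: field_simps)
qed

context S23 begin

definition Aop where "Aop q w = w - Df q (0, w)"

lemma Df_lin_ops: assumes "q \<in> U 1"
  shows "Df q (0, a - b) = Df q (0, a) - Df q (0, b)" "Df q (0, a + b) = Df q (0, a) + Df q (0, b)"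
    "Df q (0, c *\<^sub>R a) = c *\<^sub>R Df q (0, a)" "Df q 0 = 0" "Df q (x + y) = Df q x + Df q y"
    "Df q (x - y) = Df q x - Df q y" "Df q (c *\<^sub>R x) = c *\<^sub>R Df q x"
proof -
  interpret bounded_linear "Df q" using Df_lin[OF assms] .
  show "Df q (0, a - b) = Df q (0, a) - Df q (0, b)" using diff[of "(0,a)" "(0,b)"] by simp
  show "Df q (0, a + b) = Df q (0, a) + Df q (0, b)" using add[of "(0,a)" "(0,b)"] by simp
  show "Df q (0, c *\<^sub>R a) = c *\<^sub>R Df q (0, a)" using scaleR[of c "(0,a)"] by simp
  show "Df q 0 = 0" by (rule zero)
  show "Df q (x + y) = Df q x + Df q y" by (rule add)
  show "Df q (x - y) = Df q x - Df q y" by (rule diff)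
  show "Df q (c *\<^sub>R x) = c *\<^sub>R Df q x" by (rule scaleR)
qed

lemma Aop_diff: "q \<in> U 1 \<Longrightarrow> Aop q (a - b) = Aop q a - Aop q b"
  unfolding Aop_def using Df_lin_ops(1) by (simp add: algebra_simps)
lemma Aop_add: "q \<in> U 1 \<Longrightarrow> Aop q (a + b) = Aop q a + Aop q b"
  unfolding Aop_def using Df_lin_ops(2) by (simp add: algebra_simps)

lemma U1: "q \<in> U (Suc m) \<Longrightarrow> q \<in> U 1" using U_mono[of 1 "Suc m"] by auto

lemma Aop_L: "q \<in> U (Suc m) \<Longrightarrow> w \<in> L m \<Longrightarrow> Aop q w \<in> L m"
  unfolding Aop_def using Df_L[of q m "(0,w)"] ln_diff[OF lnorm] by simp

lemma NA_0a': "a \<in> L m \<Longrightarrow> NA m (0, a) = N m a"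
  using ln_nonneg[OF lnorm] by (simp add: NA_eq)

lemma Df_bound: assumes q: "q \<in> U (Suc m)"
  shows "\<exists>K\<ge>0. \<forall>a\<in>L m. N m (Df q (0, a)) \<le> K * N m a"
proof -
  obtain d where d: "d > 0" "\<And>q' w'. q' \<in> U (Suc m) \<and> snd w' \<in> L m \<and> NA (Suc m) (q' - q) + NA m (w' - 0) < d \<Longrightarrow>
     N m (Df q' w' - Df q 0) < 1"
    using Df_cont[OF q, of 0 1] ln_0[OF lnorm] by auto
  have q1: "q \<in> U 1" using U1[OF q] .
  have NA00: "NA (Suc m) 0 = 0" using ln_0[OF lnorm] by (simp add: sum_norms_def const_norms_def)
  have small: "N m (Df q (0, a)) < 1" if "a \<in> L m" "N m a < d" for a
  proof -
    have e1: "NA (Suc m) (q - q) = 0" using NA00 by simp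
    have e2: "NA m ((0::real^'n, a) - 0) = N m a" using ln_nonneg[OF lnorm that(1)] by (simp add: NA_eq)
    have "NA (Suc m) (q - q) + NA m ((0::real^'n, a) - 0) < d" using e1 e2 that(2) by linarith
    hence "N m (Df q (0,a) - Df q 0) < 1" by (intro d(2)) (use q that(1) in auto)
    thus ?thesis using Df_lin_ops(4)[OF q1] by simp
  qed
  show ?thesis
  proof (intro exI[of _ "2 / d"] conjI ballI)
    show "0 \<le> 2 / d" using d by simp
  next
    fix a assume a: "a \<in> L m"
    show "N m (Df q (0, a)) \<le> 2 / d * N m a"
    proof (cases "a = 0")
      case True
      have "(0::real^'n, 0::'e) = 0" by (simp add: zero_prod_def)
      thus ?thesis using True Df_lin_ops(4)[OF q1] ln_0[OF lnorm] by simp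
    next
      case False
      hence Na: "N m a > 0" using ln_nonneg[OF lnorm a] ln_zero_iff[OF lnorm a] by force
      define c where "c = d / (2 * N m a)"
      have c: "c > 0" using Na d by (simp add: c_def)
      have "N m (c *\<^sub>R a) = d / 2" using ln_scale(2)[OF lnorm a, of c] c Na d(1) by (simp add: c_def)
      hence "N m (Df q (0, c *\<^sub>R a)) < 1" using small[of "c *\<^sub>R a"] ln_scale(1)[OF lnorm a] d by simp
      hence "c * N m (Df q (0, a)) < 1"
        using Df_lin_ops(3)[OF q1, of c a] ln_scale(2)[OF lnorm Df_L[OF q, of "(0,a)"], of c] a c by simp
      hence "N m (Df q (0, a)) < 1 / c" using c by (simp add: field_simps)
      thus ?thesis using Na d by (simp add: c_def field_simps)
    qed
  qed
qed


lemma NA_shift: assumes "u \<in> L k" "w \<in> L k" "s \<ge> 0"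
  shows "NA k (v, u + s *\<^sub>R w) \<le> NA k (v, u) + s * N k w"
proof -
  have sw: "s *\<^sub>R w \<in> L k" using ln_scale(1)[OF lnorm assms(2)] .
  have t: "N k (u + s *\<^sub>R w) \<le> N k u + s * N k w"
    using ln_tri[OF lnorm assms(1) sw] ln_scale(2)[OF lnorm assms(2), of s] assms(3) by simp
  have n0: "0 \<le> N k (u + s *\<^sub>R w)" by (rule ln_nonneg[OF lnorm ln_add[OF lnorm assms(1) sw]])
  have "(N k (u + s *\<^sub>R w))\<^sup>2 \<le> (N k u + s * N k w)\<^sup>2" using t n0 by (intro power_mono) auto
  hence "NA k (v, u + s *\<^sub>R w) \<le> sqrt ((norm v)\<^sup>2 + (N k u + s * N k w)\<^sup>2)" by (simp add: NA_eq)
  also have "\<dots> \<le> sqrt ((norm v)\<^sup>2 + (N k u)\<^sup>2) + s * N k w"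
    by (rule sqrt_shift) (use ln_nonneg[OF lnorm assms(1)] ln_nonneg[OF lnorm assms(2)] assms(3) in auto)
  finally show ?thesis by (simp add: NA_eq)
qed

lemma A_bound_Suc:
  assumes q: "q \<in> U (Suc m)" and rq1: "NA (Suc m) q < r (Suc m)" and rq0: "NA m q < r m"
    and w: "w \<in> L (Suc m)"
  shows "N m (Aop q w) \<le> 1/2 * N m w"
proof (cases "w = 0")
  case True
  have "(0::real^'n, 0::'e) = 0" by (simp add: zero_prod_def)
  thus ?thesis using True Df_lin_ops(4)[OF U1[OF q]] ln_0[OF lnorm] by (simp add: Aop_def)
next
  case False
  obtain v u where qvu: "q = (v, u)" by (cases q)
  have vQ: "v \<in> Q" and uL: "u \<in> L (Suc m)" using U_sub[of "Suc m"] q qvu by auto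
  have wm: "w \<in> L m" and um: "u \<in> L m" using LSuc w uL by auto
  have q1: "q \<in> U 1" using U1[OF q] .
  obtain e0 where e0: "e0 > 0" and e0h: "\<And>y. y \<in> (Q \<times> UNIV) \<inter> (UNIV \<times> L (Suc m)) \<Longrightarrow> NA (Suc m) (y - q) < e0 \<Longrightarrow> y \<in> U (Suc m)"
    using U_open[OF q] by blast
  define a1 where "a1 = N (Suc m) w"
  define a0 where "a0 = N m w"
  have a1p: "a1 > 0" using ln_nonneg[OF lnorm w] ln_zero_iff[OF lnorm w] False unfolding a1_def by force
  have a0n: "a0 \<ge> 0" using ln_nonneg[OF lnorm wm] unfolding a0_def .
  define M where "M = min e0 (min (r (Suc m) - NA (Suc m) q) (r m - NA m q))"
  have Mp: "M > 0" using e0 rq1 rq0 by (simp add: M_def)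
  define \<sigma> where "\<sigma> = M / (a1 + a0 + 1)"
  have sp: "\<sigma> > 0" using Mp a1p a0n by (simp add: \<sigma>_def)
  have sa1: "s * a1 < M" and sa0: "s * a0 < M" if "0 < s" "s \<le> \<sigma>" for s
  proof -
    have "s * a1 \<le> \<sigma> * a1" "s * a0 \<le> \<sigma> * a0" using that a1p a0n by (auto intro: mult_right_mono)
    moreover have "\<sigma> * a1 < M" "\<sigma> * a0 < M"
    proof -
      have den: "a1 + a0 + 1 > 0" using a1p a0n by simp
      have "M * a1 < M * (a1 + a0 + 1)" "M * a0 < M * (a1 + a0 + 1)" using Mp a0n a1p by (intro mult_strict_left_mono; simp)+
      thus "\<sigma> * a1 < M" "\<sigma> * a0 < M" using den by (simp_all add: \<sigma>_def field_simps)
    qed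
    ultimately show "s * a1 < M" "s * a0 < M" by linarith+
  qed
  define qs where "qs s = (v, u + s *\<^sub>R w)" for s
  have swL: "s *\<^sub>R w \<in> L (Suc m)" for s using ln_scale(1)[OF lnorm w] .
  have usL: "u + s *\<^sub>R w \<in> L (Suc m)" for s using ln_add[OF lnorm uL swL] .
  have qsU: "qs s \<in> U (Suc m)" and qsr1: "NA (Suc m) (qs s) < r (Suc m)" and qsr0: "NA m (qs s) < r m"
    if s: "0 < s" "s \<le> \<sigma>" for s
  proof -
    have "NA (Suc m) (qs s - q) = N (Suc m) (s *\<^sub>R w)"
      using NA_0a'[OF swL] by (simp add: qs_def qvu)
    also have "\<dots> = s * a1" using ln_scale(2)[OF lnorm w, of s] s by (simp add: a1_def)
    also have "\<dots> < e0" using sa1[OF s] by (simp add: M_def)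
    finally show "qs s \<in> U (Suc m)" using e0h[of "qs s"] vQ usL by (auto simp: qs_def)
    have "NA (Suc m) (qs s) \<le> NA (Suc m) q + s * a1"
      using NA_shift[OF uL w, of s v] s by (simp add: qs_def qvu a1_def)
    thus "NA (Suc m) (qs s) < r (Suc m)" using sa1[OF s] by (simp add: M_def)
    have "NA m (qs s) \<le> NA m q + s * a0"
      using NA_shift[OF um wm, of s v] s by (simp add: qs_def qvu a0_def)
    thus "NA m (qs s) < r m" using sa0[OF s] by (simp add: M_def)
  qed
  define D where "D s = (u + s *\<^sub>R w - f (qs s)) - (u - f q)" for s
  have DL: "D s \<in> L (Suc m)" if "0 < s" "s \<le> \<sigma>" for s
    unfolding D_def using ln_diff[OF lnorm ln_diff[OF lnorm usL fL[OF qsU[OF that]]] ln_diff[OF lnorm uL fL[OF q]]] .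
  have Dc: "N k (D s) \<le> 1/2 * (s * N k w)" if "0 < s" "s \<le> \<sigma>" "k = m \<or> k = Suc m" for s k
  proof -
    have kU: "q \<in> U k" "qs s \<in> U k" using that(3) q qsU[OF that(1,2)] U_Suc by auto
    have kr: "NA k q < r k" "NA k (qs s) < r k" using that(3) rq0 rq1 qsr0[OF that(1,2)] qsr1[OF that(1,2)] by auto
    have c: "N k ((u - f (v, u)) - ((u + s *\<^sub>R w) - f (v, u + s *\<^sub>R w))) \<le> (1/2) * N k (u - (u + s *\<^sub>R w))"
      by (rule r_contr) (use kU kr in \<open>auto simp: qs_def qvu\<close>)
    have wk: "w \<in> L k" using that(3) w wm by auto
    have Dk: "D s \<in> L k" using DL[OF that(1,2)] LSuc that(3) by auto
    have "N k (u - (u + s *\<^sub>R w)) = s * N k w"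
      using ln_neg(2)[OF lnorm ln_scale(1)[OF lnorm wk]] ln_scale(2)[OF lnorm wk, of s] that(1) by simp
    moreover have "N k ((u - f (v, u)) - ((u + s *\<^sub>R w) - f (v, u + s *\<^sub>R w))) = N k (D s)"
    proof -
      have "(u - f (v, u)) - ((u + s *\<^sub>R w) - f (v, u + s *\<^sub>R w)) = - D s" by (simp add: D_def qs_def qvu)
      thus ?thesis using ln_neg(2)[OF lnorm Dk] by simp
    qed
    ultimately show ?thesis using c by simp
  qed
  define sk where "sk k = \<sigma> / (real k + 1)" for k :: nat
  have skp: "0 < sk k" "sk k \<le> \<sigma>" for k using sp by (auto simp: sk_def field_simps)
  define x where "x k = (1 / sk k) *\<^sub>R D (sk k)" for k
  have xL: "x k \<in> L (Suc m)" for k using ln_scale(1)[OF lnorm DL[OF skp]] by (simp add: x_def)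
  have xN: "N k' (x k) \<le> 1/2 * N k' w" if "k' = m \<or> k' = Suc m" for k k'
  proof -
    have Dk: "D (sk k) \<in> L k'" using DL[OF skp] LSuc that by auto
    have "N k' (x k) = (1 / sk k) * N k' (D (sk k))" using ln_scale(2)[OF lnorm Dk] skp[of k] by (simp add: x_def)
    also have "\<dots> \<le> (1 / sk k) * (1/2 * (sk k * N k' w))"
      using Dc[OF skp that] skp[of k] by (intro mult_left_mono) auto
    also have "\<dots> = 1/2 * N k' w" using skp[of k] by simp
    finally show ?thesis .
  qed
  obtain \<rho> y where rho: "strict_mono \<rho>" "y \<in> L m" "(\<lambda>k. N m (x (\<rho> k) - y)) \<longlonglongrightarrow> 0"
    using lcompact[of m "Suc m" x "1/2 * N (Suc m) w"] xL xN by auto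
  have conv: "x \<longlonglongrightarrow> Aop q w"
  proof (rule LIMSEQ_I)
    fix \<epsilon> :: real assume ep: "\<epsilon> > 0"
    have w1: "w \<in> L 1" using w Lmono[of 1 "Suc m"] by auto
    define b1 where "b1 = N 1 w"
    have b1p: "b1 > 0" using ln_nonneg[OF lnorm w1] ln_zero_iff[OF lnorm w1] False unfolding b1_def by force
    obtain d where d: "d > 0" "\<And>h. q + h \<in> U 1 \<and> 0 < NA 1 h \<and> NA 1 h < d \<Longrightarrow>
               norm (f (q + h) - f q - Df q h) \<le> (\<epsilon> / (2 * b1)) * NA 1 h"
      using Df_deriv[OF q1, of "\<epsilon> / (2 * b1)"] ep b1p by auto
    obtain K :: nat where K: "real K > \<sigma> * b1 / d" using reals_Archimedean2 by blast
    show "\<exists>K. \<forall>k\<ge>K. norm (x k - Aop q w) < \<epsilon>"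
    proof (intro exI[of _ K] allI impI)
      fix k assume kK: "k \<ge> K"
      define s where "s = sk k"
      have s: "0 < s" "s \<le> \<sigma>" using skp by (auto simp: s_def)
      have "s * b1 < d"
      proof -
        have "real k + 1 > \<sigma> * b1 / d" using K kK by linarith
        hence "\<sigma> * b1 < d * (real k + 1)" using d(1) by (simp add: field_simps)
        thus ?thesis using b1p by (simp add: s_def sk_def field_simps)
      qed
      have swL1: "s *\<^sub>R w \<in> L 1" using ln_scale(1)[OF lnorm w1] .
      have NAh: "NA 1 (0, s *\<^sub>R w) = s * b1"
        using NA_0a'[OF swL1] ln_scale(2)[OF lnorm w1, of s] s by (simp add: b1_def)
      have qh: "q + (0, s *\<^sub>R w) = qs s" by (simp add: qs_def qvu)
      have bnd: "norm (f (qs s) - f q - Df q (0, s *\<^sub>R w)) \<le> (\<epsilon> / (2 * b1)) * (s * b1)"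
      proof -
        have pre: "q + (0, s *\<^sub>R w) \<in> U 1 \<and> 0 < NA 1 (0, s *\<^sub>R w) \<and> NA 1 (0, s *\<^sub>R w) < d"
          unfolding qh NAh using U1[OF qsU[OF s]] s b1p \<open>s * b1 < d\<close> by simp
        from d(2)[OF pre] show ?thesis unfolding qh NAh .
      qed
      have "x k - Aop q w = - ((1 / s) *\<^sub>R (f (qs s) - f q - Df q (0, s *\<^sub>R w)))"
        using s Df_lin_ops(3)[OF q1, of s w]
        by (simp add: x_def s_def[symmetric] D_def Aop_def algebra_simps)
      hence "norm (x k - Aop q w) = (1 / s) * norm (f (qs s) - f q - Df q (0, s *\<^sub>R w))"
        using s by simp
      also have "\<dots> \<le> (1 / s) * ((\<epsilon> / (2 * b1)) * (s * b1))" using bnd s by (intro mult_left_mono) auto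
      also have "\<dots> = \<epsilon> / 2" using s b1p by (simp add: field_simps)
      finally show "norm (x k - Aop q w) < \<epsilon>" using ep by linarith
    qed
  qed
  have c1: "(\<lambda>k. x (\<rho> k)) \<longlonglongrightarrow> Aop q w" using LIMSEQ_subseq_LIMSEQ[OF conv rho(1)] by (simp add: o_def)
  obtain C where C: "C > 0" "\<And>z. z \<in> L m \<Longrightarrow> norm z \<le> C * N m z" using incl_bound[of m] by auto
  have "(\<lambda>k. x (\<rho> k) - y) \<longlonglongrightarrow> 0"
  proof (rule Lim_null_comparison)
    show "\<forall>\<^sub>F k in sequentially. norm (x (\<rho> k) - y) \<le> C * N m (x (\<rho> k) - y)"
    proof (intro always_eventually allI)
      fix k
      have "x (\<rho> k) \<in> L m" using xL LSuc by blast
      thus "norm (x (\<rho> k) - y) \<le> C * N m (x (\<rho> k) - y)" using C(2) ln_diff[OF lnorm _ rho(2)] by blast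
    qed
    show "(\<lambda>k. C * N m (x (\<rho> k) - y)) \<longlonglongrightarrow> 0" using tendsto_mult_right_zero[OF rho(3)] by simp
  qed
  hence c2: "(\<lambda>k. x (\<rho> k)) \<longlonglongrightarrow> y" using LIM_zero_iff by blast
  have yA: "y = Aop q w" using LIMSEQ_unique[OF c2 c1] .
  show ?thesis
  proof (rule small_eps[where c=1])
    fix \<epsilon> :: real assume ep: "\<epsilon> > 0"
    obtain k0 where "\<forall>n\<ge>k0. norm (N m (x (\<rho> n) - y) - 0) < \<epsilon>"
      using LIMSEQ_D[OF rho(3) ep] by blast
    hence "\<bar>N m (x (\<rho> k0) - y)\<bar> < \<epsilon>" by simp
    hence k: "N m (x (\<rho> k0) - y) < \<epsilon>" by simp
    define k where "k = k0"
    have xm: "x (\<rho> k) \<in> L m" using xL LSuc by auto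
    note k = k[folded k_def]
    have "N m y \<le> N m (y - x (\<rho> k)) + N m (x (\<rho> k) - 0)"
      using ln_tri3[OF lnorm rho(2) xm ln_0(2)[OF lnorm]] by simp
    also have "\<dots> = N m (x (\<rho> k) - y) + N m (x (\<rho> k))" using ln_sym[OF lnorm rho(2) xm] by simp
    also have "\<dots> \<le> \<epsilon> + 1/2 * N m w" using k xN[of m "\<rho> k"] by simp
    finally show "N m (Aop q w) \<le> 1/2 * N m w + 1 * \<epsilon>" using yA by simp
  qed
qed

end



lemma fixpt:
  assumes ln: "level_norm S n" and lc: "level_complete S n"
    and TS: "\<And>a. a \<in> S \<Longrightarrow> T a \<in> S"
    and Tc: "\<And>a b. a \<in> S \<Longrightarrow> b \<in> S \<Longrightarrow> n (T a - T b) \<le> 1/2 * n (a - b)"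
  shows "\<exists>z\<in>S. T z = z"
proof -
  define z where "z j = (T ^^ j) 0" for j
  have zS: "z j \<in> S" for j by (induction j) (auto simp: z_def ln_0[OF ln] TS)
  have zSuc: "z (Suc j) = T (z j)" for j by (simp add: z_def)
  define c where "c = n (z 1 - z 0)"
  have step: "n (z (Suc j) - z j) \<le> (1/2)^j * c" for j
  proof (induction j)
    case 0 thus ?case by (simp add: c_def)
  next
    case (Suc j)
    have "n (z (Suc (Suc j)) - z (Suc j)) \<le> 1/2 * n (z (Suc j) - z j)"
      using Tc[OF zS[of "Suc j"] zS[of j]] by (simp add: zSuc)
    also have "\<dots> \<le> 1/2 * ((1/2)^j * c)" using Suc by simp
    finally show ?case by simp
  qed
  have far: "n (z (j + k) - z j) \<le> 2 * (1/2)^j * c * (1 - (1/2)^k)" for j k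
  proof (induction k)
    case 0 thus ?case using ln_0[OF ln] by simp
  next
    case (Suc k)
    have "n (z (j + Suc k) - z j) \<le> n (z (Suc (j + k)) - z (j + k)) + n (z (j + k) - z j)"
      using ln_tri3[OF ln zS zS zS] by simp
    also have "\<dots> \<le> (1/2)^(j+k) * c + 2 * (1/2)^j * c * (1 - (1/2)^k)" using step Suc by (intro add_mono) auto
    also have "\<dots> = 2 * (1/2)^j * c * (1 - (1/2)^(Suc k))" by (simp add: power_add algebra_simps)
    finally show ?case .
  qed
  have c0: "c \<ge> 0" unfolding c_def using ln_nonneg[OF ln ln_diff[OF ln zS zS]] .
  have far2: "n (z i - z j) \<le> 2 * (1/2)^j * c" if "j \<le> i" for i j
  proof -
    from le_Suc_ex[OF that] obtain k where "i = j + k" ..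
    hence "n (z i - z j) \<le> 2 * (1/2)^j * c * (1 - (1/2)^k)" using far by simp
    also have "\<dots> \<le> 2 * (1/2)^j * c" using c0 by (simp add: mult_left_le)
    finally show ?thesis .
  qed
  have "\<forall>e>0. \<exists>K. \<forall>i\<ge>K. \<forall>j\<ge>K. n (z i - z j) < e"
  proof (intro allI impI)
    fix e :: real assume e: "e > 0"
    obtain K where K: "(1/2::real)^K < e / (4 * c + 1)" using real_arch_pow_inv[of "e / (4 * c + 1)" "1/2"] e c0 by auto
    have "4 * c * (1/2)^K < e"
    proof -
      have "4 * c * (1/2)^K \<le> (4 * c + 1) * (1/2::real)^K" by (simp add: algebra_simps)
      also have "\<dots> < (4 * c + 1) * (e / (4 * c + 1))" using K c0 by (intro mult_strict_left_mono) auto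
      also have "\<dots> = e" using c0 by simp
      finally show ?thesis .
    qed
    show "\<exists>K. \<forall>i\<ge>K. \<forall>j\<ge>K. n (z i - z j) < e"
    proof (intro exI[of _ K] allI impI)
      fix i j assume ij: "i \<ge> K" "j \<ge> K"
      have "n (z i - z j) \<le> n (z i - z K) + n (z K - z j)" using ln_tri3[OF ln zS zS zS] .
      also have "\<dots> = n (z i - z K) + n (z j - z K)" using ln_sym[OF ln zS zS] by simp
      also have "\<dots> \<le> 2 * (1/2)^K * c + 2 * (1/2)^K * c" using far2 ij by (intro add_mono) auto
      finally show "n (z i - z j) < e" using \<open>4 * c * (1/2)^K < e\<close> by simp
    qed
  qed
  hence "(\<forall>k. z k \<in> S) \<and> (\<forall>e>0. \<exists>K. \<forall>i\<ge>K. \<forall>j\<ge>K. n (z i - z j) < e)" using zS by blast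
  from lc[unfolded level_complete_def, rule_format, OF this] obtain y where y: "y \<in> S" "(\<lambda>k. n (z k - y)) \<longlonglongrightarrow> 0"
    by blast
  have "n (T y - y) \<le> 0 + (3/2) * e" if e: "e > 0" for e
  proof -
    obtain k0 where "\<forall>k\<ge>k0. norm (n (z k - y) - 0) < e" using LIMSEQ_D[OF y(2) e] by blast
    hence k0: "n (z k - y) < e" if "k \<ge> k0" for k using that by auto
    have "n (T y - y) \<le> n (T y - T (z k0)) + n (T (z k0) - y)" using ln_tri3[OF ln TS[OF y(1)] TS[OF zS] y(1)] .
    also have "\<dots> \<le> 1/2 * n (y - z k0) + n (z (Suc k0) - y)" using Tc[OF y(1) zS] zSuc by (intro add_mono) auto
    also have "\<dots> = 1/2 * n (z k0 - y) + n (z (Suc k0) - y)" using ln_sym[OF ln y(1) zS] by simp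
    also have "\<dots> \<le> 1/2 * e + e" using k0[of k0] k0[of "Suc k0"] by (intro add_mono) auto
    finally show ?thesis by simp
  qed
  hence "n (T y - y) \<le> 0" by (rule small_eps)
  hence "T y - y = 0" using ln_nonneg[OF ln ln_diff[OF ln TS[OF y(1)] y(1)]] ln_zero_iff[OF ln ln_diff[OF ln TS[OF y(1)] y(1)]] by simp
  thus ?thesis using y(1) by auto
qed

context S23 begin

lemma A_bound:
  assumes q: "q \<in> U (Suc m)" and rq1: "NA (Suc m) q < r (Suc m)" and rq0: "NA m q < r m"
    and w: "w \<in> L m"
  shows "N m (Aop q w) \<le> 1/2 * N m w"
proof -
  obtain K where K: "K \<ge> 0" "\<And>a. a \<in> L m \<Longrightarrow> N m (Df q (0, a)) \<le> K * N m a" using Df_bound[OF q] by blast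
  have q1: "q \<in> U 1" using U1[OF q] .
  show ?thesis
  proof (rule small_eps[where c = "K + 2"])
    fix \<eta> :: real assume eta: "\<eta> > 0"
    obtain w' where w': "w' \<in> (\<Inter>k. L k)" "N m (w - w') < \<eta>" using ldense[OF w eta] by blast
    have w'S: "w' \<in> L (Suc m)" and w'm: "w' \<in> L m" using w' by auto
    have dL: "w - w' \<in> L m" using ln_diff[OF lnorm w w'm] .
    have DfdL: "Df q (0, w - w') \<in> L m" using Df_L[OF q, of "(0, w - w')"] dL by simp
    have eq: "Aop q w = Aop q (w - w') + Aop q w'" using Aop_diff[OF q1, of w w'] by simp
    have b1: "N m (Aop q (w - w')) \<le> (1 + K) * \<eta>"
    proof -
      have "N m (Aop q (w - w')) \<le> N m (w - w') + N m (Df q (0, w - w'))"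
        unfolding Aop_def using ln_tri_diff[OF lnorm dL DfdL] .
      also have "\<dots> \<le> \<eta> + K * \<eta>" using w'(2) K(2)[OF dL] mult_left_mono[OF less_imp_le[OF w'(2)] K(1)] by linarith
      finally show ?thesis by (simp add: algebra_simps)
    qed
    have b2: "N m (Aop q w') \<le> 1/2 * N m w'" by (rule A_bound_Suc[OF q rq1 rq0 w'S])
    have b3: "N m w' \<le> N m w + \<eta>"
    proof -
      have "N m w' = N m (w - (w - w'))" by simp
      also have "\<dots> \<le> N m w + N m (w - w')" using ln_tri_diff[OF lnorm w dL] .
      finally show ?thesis using w'(2) by linarith
    qed
    have "N m (Aop q w) \<le> N m (Aop q (w - w')) + N m (Aop q w')"
      unfolding eq by (rule ln_tri[OF lnorm Aop_L[OF q dL] Aop_L[OF q w'm]])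
    also have "\<dots> \<le> (1 + K) * \<eta> + 1/2 * (N m w + \<eta>)"
    proof -
      have "1/2 * N m w' \<le> 1/2 * (N m w + \<eta>)" using b3 by simp
      thus ?thesis using b1 b2 by linarith
    qed
    also have "\<dots> \<le> 1/2 * N m w + (K + 2) * \<eta>" using eta by (simp add: algebra_simps)
    finally show "N m (Aop q w) \<le> 1/2 * N m w + (K + 2) * \<eta>" .
  qed
qed

end



context S23 begin

lemma rho1_ex: "\<exists>e>0. \<forall>y\<in>(Q \<times> UNIV) \<inter> (UNIV \<times> L 1). NA 1 y < e \<longrightarrow> y \<in> U 1"
  using U_open[OF U_0[of 1]] by simp

definition rho1 where "rho1 = (SOME e. e > 0 \<and> (\<forall>y\<in>(Q \<times> UNIV) \<inter> (UNIV \<times> L 1). NA 1 y < e \<longrightarrow> y \<in> U 1))"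
lemma rho1: "rho1 > 0" "y \<in> (Q \<times> UNIV) \<inter> (UNIV \<times> L 1) \<Longrightarrow> NA 1 y < rho1 \<Longrightarrow> y \<in> U 1"
  using someI_ex[OF rho1_ex] unfolding rho1_def[symmetric] by blast+

definition C1 where "C1 = (SOME C. C > 0 \<and> (\<forall>x\<in>L 1. norm x \<le> C * N 1 x))"
lemma C1: "C1 > 0" "x \<in> L 1 \<Longrightarrow> norm x \<le> C1 * N 1 x"
  using someI_ex[OF incl_bound[of 1]] unfolding C1_def[symmetric] by blast+

definition s where "s j = (if j = 1 then min (r 1 / 2) (min (rho1 / 2) (r 0 / (2 * (1 + C1)))) else r j / 2)"

lemma s_pos: "s j > 0" using r_pos rho1 C1 by (simp add: s_def)
lemma s_le: "2 * s j \<le> r j"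
proof (cases "j = 1")
  case True
  have "s j = min (r 1 / 2) (min (rho1 / 2) (r 0 / (2 * (1 + C1))))" using True by (simp add: s_def)
  hence "s j \<le> r 1 / 2" by (metis min.cobounded1)
  thus ?thesis using True by simp
qed (simp add: s_def)

lemma NA_le: "u \<in> L j \<Longrightarrow> NA j (v, u) \<le> norm v + N j u"
  using sqrt_le_add[of "norm v" "N j u"] ln_nonneg[OF lnorm] by (simp add: NA_eq)

lemma box_r: "u \<in> L j \<Longrightarrow> norm v < s j \<Longrightarrow> N j u < s j \<Longrightarrow> NA j (v, u) < r j"
  using NA_le[of u j v] s_le[of j] by linarith

lemma box1_U: "v \<in> Q \<Longrightarrow> u \<in> L 1 \<Longrightarrow> norm v < s 1 \<Longrightarrow> N 1 u < s 1 \<Longrightarrow> (v, u) \<in> U 1"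
proof -
  assume a: "v \<in> Q" "u \<in> L 1" "norm v < s 1" "N 1 u < s 1"
  have "NA 1 (v, u) < 2 * s 1" using NA_le[OF a(2), of v] a by linarith
  also have "\<dots> \<le> rho1" by (simp add: s_def)
  finally show ?thesis using rho1(2)[of "(v,u)"] a by auto
qed

lemma box1_r0: "u \<in> L 1 \<Longrightarrow> norm v < s 1 \<Longrightarrow> N 1 u < s 1 \<Longrightarrow> NA 0 (v, u) < r 0"
proof -
  assume a: "u \<in> L 1" "norm v < s 1" "N 1 u < s 1"
  have "NA 0 (v, u) \<le> norm v + norm u" using NA_le[of u 0 v] by (simp add: L0 N0)
  also have "\<dots> \<le> norm v + C1 * N 1 u" using C1(2)[OF a(1)] by simp
  also have "\<dots> < s 1 + C1 * s 1" using a C1(1) by (intro add_strict_mono mult_strict_left_mono) auto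
  also have "\<dots> = (1 + C1) * s 1" by (simp add: algebra_simps)
  also have "\<dots> \<le> (1 + C1) * (r 0 / (2 * (1 + C1)))" using C1(1) by (intro mult_left_mono) (auto simp: s_def)
  also have "\<dots> = r 0 / 2" using C1(1) by (simp add: field_simps)
  also have "\<dots> < r 0" using r_pos[of 0] by simp
  finally show ?thesis .
qed

definition G where "G j = {x \<in> W j. (x, \<delta> x) \<in> U j \<and> norm x < s j \<and> N j (\<delta> x) < s j}"

definition W' where "W' m = {x. \<forall>j\<le>Suc m. x \<in> G j}"

lemma W'_Suc: "W' (Suc m) \<subseteq> W' m" unfolding W'_def by auto
lemma W'_G: "x \<in> W' m \<Longrightarrow> j \<le> Suc m \<Longrightarrow> x \<in> G j" unfolding W'_def by auto
lemma W'_W: "W' m \<subseteq> W m" unfolding W'_def G_def by auto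
lemma W'_Q: "W' m \<subseteq> Q" using W'_W W_sub by blast
lemma W'_0: "0 \<in> W' m"
  unfolding W'_def G_def using W_0 d0 U_0 s_pos ln_0[OF lnorm] by (auto simp: zero_prod_def)

lemma G_open: assumes x: "x \<in> G j" shows "\<exists>e>0. \<forall>y\<in>Q. norm (y - x) < e \<longrightarrow> y \<in> G j"
proof -
  have xW: "x \<in> W j" and xU: "(x, \<delta> x) \<in> U j" and xs: "norm x < s j" "N j (\<delta> x) < s j"
    using x by (auto simp: G_def)
  obtain e1 where e1: "e1 > 0" "\<And>y. y \<in> Q \<Longrightarrow> norm (y - x) < e1 \<Longrightarrow> y \<in> W j" using W_open[OF xW] by blast
  obtain e2 where e2: "e2 > 0" "\<And>p. p \<in> (Q \<times> UNIV) \<inter> (UNIV \<times> L j) \<Longrightarrow> NA j (p - (x, \<delta> x)) < e2 \<Longrightarrow> p \<in> U j"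
    using U_open[OF xU] by blast
  define \<epsilon> where "\<epsilon> = min (e2 / 2) (s j - N j (\<delta> x))"
  have ep: "\<epsilon> > 0" using e2 xs by (simp add: \<epsilon>_def)
  obtain d where d: "d > 0" "\<And>y. y \<in> W j \<Longrightarrow> norm (y - x) < d \<Longrightarrow> N j (\<delta> y - \<delta> x) < \<epsilon>"
    using d_cont[OF xW ep] by blast
  define e where "e = min e1 (min d (min (e2 / 2) (s j - norm x)))"
  have e: "e > 0" using e1 d e2 xs by (simp add: e_def)
  show ?thesis
  proof (intro exI[of _ e] conjI e ballI impI)
    fix y assume y: "y \<in> Q" "norm (y - x) < e"
    have yW: "y \<in> W j" using e1(2)[OF y(1)] y(2) by (simp add: e_def)
    have dd: "N j (\<delta> y - \<delta> x) < \<epsilon>" using d(2)[OF yW] y(2) by (simp add: e_def)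
    have dyL: "\<delta> y \<in> L j" and dxL: "\<delta> x \<in> L j" using dL yW xW by auto
    have "NA j ((y, \<delta> y) - (x, \<delta> x)) \<le> norm (y - x) + N j (\<delta> y - \<delta> x)"
      using NA_le[OF ln_diff[OF lnorm dyL dxL], of "y - x"] by simp
    also have "\<dots> < e2" using y(2) dd by (simp add: e_def \<epsilon>_def)
    finally have yU: "(y, \<delta> y) \<in> U j" using e2(2)[of "(y, \<delta> y)"] y(1) dyL by auto
    have "norm y \<le> norm x + norm (y - x)" using norm_triangle_sub[of y x] by simp
    hence ys1: "norm y < s j" using y(2) by (simp add: e_def)
    have "N j (\<delta> y) \<le> N j (\<delta> x) + N j (\<delta> y - \<delta> x)"
      using ln_tri[OF lnorm dxL ln_diff[OF lnorm dyL dxL]] by simp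
    hence ys2: "N j (\<delta> y) < s j" using dd by (simp add: \<epsilon>_def)
    show "y \<in> G j" using yW yU ys1 ys2 by (simp add: G_def)
  qed
qed

lemma Gs_open: "(\<forall>j\<le>n. x \<in> G j) \<Longrightarrow> \<exists>e>0. \<forall>y\<in>Q. norm (y - x) < e \<longrightarrow> (\<forall>j\<le>n. y \<in> G j)"
proof (induction n)
  case 0
  then obtain e where "e > 0" "\<forall>y\<in>Q. norm (y - x) < e \<longrightarrow> y \<in> G 0" using G_open[of x 0] by auto
  thus ?case by (intro exI[of _ e]) auto
next
  case (Suc n)
  obtain e1 where e1: "e1 > 0" "\<forall>y\<in>Q. norm (y - x) < e1 \<longrightarrow> (\<forall>j\<le>n. y \<in> G j)" using Suc by auto
  obtain e2 where e2: "e2 > 0" "\<forall>y\<in>Q. norm (y - x) < e2 \<longrightarrow> y \<in> G (Suc n)" using G_open[of x "Suc n"] Suc.prems by auto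
  show ?case
  proof (intro exI[of _ "min e1 e2"] conjI ballI impI allI)
    show "min e1 e2 > 0" using e1 e2 by simp
  next
    fix y j assume y: "y \<in> Q" "norm (y - x) < min e1 e2" and j: "j \<le> Suc n"
    show "y \<in> G j"
    proof (cases "j = Suc n")
      case True thus ?thesis using e2 y by auto
    next
      case False thus ?thesis using e1 y j by auto
    qed
  qed
qed

lemma W'_open: "x \<in> W' m \<Longrightarrow> \<exists>e>0. \<forall>y\<in>Q. norm (y - x) < e \<longrightarrow> y \<in> W' m"
  unfolding W'_def using Gs_open[of "Suc m" x] by auto

lemma W'_reg: assumes "x \<in> W' (Suc m)"
  shows "(x, \<delta> x) \<in> U (Suc m)" "NA (Suc m) (x, \<delta> x) < r (Suc m)" "NA m (x, \<delta> x) < r m"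
proof -
  have g: "x \<in> G (Suc m)" "x \<in> G m" using W'_G[OF assms] by auto
  show "(x, \<delta> x) \<in> U (Suc m)" using g by (simp add: G_def)
  have "x \<in> W (Suc m)" "x \<in> W m" using g by (auto simp: G_def)
  hence l: "\<delta> x \<in> L (Suc m)" "\<delta> x \<in> L m" using dL by auto
  show "NA (Suc m) (x, \<delta> x) < r (Suc m)" using g box_r[OF l(1)] by (auto simp: G_def)
  show "NA m (x, \<delta> x) < r m" using g box_r[OF l(2)] by (auto simp: G_def)
qed

lemma W'_box: assumes "x \<in> W' m"
  shows "x \<in> Q" "\<delta> x \<in> L 1" "norm x < s 1" "N 1 (\<delta> x) < s 1"
  using W'_G[OF assms, of 1] W'_Q assms dL by (auto simp: G_def)

end



context S23 begin

lemma W'_mono: "m \<le> n \<Longrightarrow> W' n \<subseteq> W' m"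
  by (induction n rule: dec_induct) (use W'_Suc in auto)

definition Z where "Z x e = (SOME z. Df (x, \<delta> x) (e, z) = 0)"

lemma Df_pair: "q \<in> U 1 \<Longrightarrow> Df q (e, z) = Df q (e, 0) + Df q (0, z)"
  using Df_lin_ops(5)[of q "(e,0)" "(0,z)"] by simp

lemma Z_spec: assumes x: "x \<in> W' (Suc m)"
  shows "Z x e \<in> L m" "Df (x, \<delta> x) (e, Z x e) = 0"
proof -
  define q where "q = (x, \<delta> x)"
  have reg: "q \<in> U (Suc m)" "NA (Suc m) q < r (Suc m)" "NA m q < r m" using W'_reg[OF x] by (auto simp: q_def)
  have q1: "q \<in> U 1" using U1[OF reg(1)] .
  define T where "T w = Aop q w - Df q (e, 0)" for w
  have eL: "Df q (e, 0) \<in> L m" using Df_L[OF reg(1), of "(e,0)"] ln_0[OF lnorm] by simp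
  have TS: "T a \<in> L m" if "a \<in> L m" for a using ln_diff[OF lnorm Aop_L[OF reg(1) that] eL] by (simp add: T_def)
  have Tc: "N m (T a - T b) \<le> 1/2 * N m (a - b)" if "a \<in> L m" "b \<in> L m" for a b
  proof -
    have "T a - T b = Aop q (a - b)" using Aop_diff[OF q1] by (simp add: T_def)
    thus ?thesis using A_bound[OF reg ln_diff[OF lnorm that]] by simp
  qed
  obtain z where z: "z \<in> L m" "T z = z" using fixpt[OF lnorm lcomp TS Tc] by blast
  have zsol: "Df q (e, z) = 0" using z(2) Df_pair[OF q1, of e z] by (simp add: T_def Aop_def algebra_simps)
  hence Zsol: "Df q (e, Z x e) = 0" unfolding Z_def q_def by (rule someI)
  have "Z x e = z"
  proof -
    have x0: "x \<in> W' (Suc 0)" using x W'_mono[of "Suc 0" "Suc m"] by auto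
    have reg0: "q \<in> U (Suc 0)" "NA (Suc 0) q < r (Suc 0)" "NA 0 q < r 0" using W'_reg[OF x0] by (auto simp: q_def)
    have "Df q (e, 0) + Df q (0, Z x e) = Df q (e, 0) + Df q (0, z)"
      using Df_pair[OF q1, of e "Z x e"] Df_pair[OF q1, of e z] Zsol zsol by simp
    hence "Df q (0, Z x e) = Df q (0, z)" by simp
    hence "Df q (0, Z x e - z) = 0" using Df_lin_ops(1)[OF q1] by simp
    hence "Aop q (Z x e - z) = Z x e - z" by (simp add: Aop_def)
    hence "norm (Z x e - z) \<le> 1/2 * norm (Z x e - z)" using A_bound[OF reg0, of "Z x e - z"] by (simp add: L0 N0)
    thus ?thesis by simp
  qed
  thus "Z x e \<in> L m" using z by simp
  show "Df (x, \<delta> x) (e, Z x e) = 0" using Zsol by (simp add: q_def)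
qed

definition Dd where "Dd x h = (\<Sum>i\<in>UNIV. (h $ i) *\<^sub>R Z x (axis i 1))"

lemma Dd_linear: "linear (Dd x)"
proof (rule linearI)
  show "Dd x (a + b) = Dd x a + Dd x b" for a b by (simp add: Dd_def scaleR_add_left sum.distrib)
  show "Dd x (c *\<^sub>R a) = c *\<^sub>R Dd x a" for c a by (simp add: Dd_def scaleR_sum_right)
qed

lemma Dd_bl: "bounded_linear (Dd x)"
  using Dd_linear linear_conv_bounded_linear by blast

lemma Dd_0: "Dd x 0 = 0" by (simp add: Dd_def)

lemma Dd_L: "x \<in> W' (Suc m) \<Longrightarrow> Dd x h \<in> L m"
  unfolding Dd_def using ln_sum[OF lnorm, of UNIV "\<lambda>i. (h $ i) *\<^sub>R Z x (axis i 1)"]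
    ln_scale(1)[OF lnorm Z_spec(1)] by auto

lemma Dd_eq: assumes x: "x \<in> W' (Suc 0)" shows "Df (x, \<delta> x) (h, Dd x h) = 0"
proof -
  define q where "q = (x, \<delta> x)"
  have q1: "q \<in> U 1" using W'_reg(1)[OF x] by (simp add: q_def)
  have lin: "linear (Df q)" using bounded_linear.linear[OF Df_lin[OF q1]] .
  have hexp: "h = (\<Sum>i\<in>UNIV. (h $ i) *\<^sub>R axis i 1)" using basis_expansion[of h] by (simp add: scalar_mult_eq_scaleR)
  have pe: "(h, Dd x h) = (\<Sum>i\<in>UNIV. (h $ i) *\<^sub>R (axis i 1, Z x (axis i 1)))"
  proof (rule prod_eqI)
    show "fst (h, Dd x h) = fst (\<Sum>i\<in>UNIV. (h $ i) *\<^sub>R (axis i 1, Z x (axis i 1)))"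
      using hexp by (simp add: fst_sum)
    show "snd (h, Dd x h) = snd (\<Sum>i\<in>UNIV. (h $ i) *\<^sub>R (axis i 1, Z x (axis i 1)))"
      by (simp add: snd_sum Dd_def)
  qed
  have "Df q (h, Dd x h) = (\<Sum>i\<in>UNIV. Df q ((h $ i) *\<^sub>R (axis i 1, Z x (axis i 1))))"
    unfolding pe by (rule linear_sum[OF lin])
  also have "\<dots> = (\<Sum>i\<in>UNIV. (h $ i) *\<^sub>R Df q (axis i 1, Z x (axis i 1)))"
    by (simp only: Df_lin_ops(7)[OF q1])
  also have "\<dots> = 0" using Z_spec(2)[OF x] by (simp add: q_def)
  finally show ?thesis by (simp add: q_def)
qed

end



context S23 begin

lemma Z_cont: assumes x: "x \<in> W' (Suc m)" and ep: "\<epsilon> > 0"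
  shows "\<exists>d>0. \<forall>y\<in>W' (Suc m). norm (y - x) < d \<longrightarrow> N m (Z y e - Z x e) < \<epsilon>"
proof -
  define p where "p = (x, \<delta> x)"
  define z where "z = Z x e"
  have zL: "z \<in> L m" and zs: "Df p (e, z) = 0" using Z_spec[OF x] by (auto simp: p_def z_def)
  have pU: "p \<in> U (Suc m)" using W'_reg(1)[OF x] by (simp add: p_def)
  obtain d1 where d1: "d1 > 0" "\<And>q' w'. q' \<in> U (Suc m) \<and> snd w' \<in> L m \<and> NA (Suc m) (q' - p) + NA m (w' - (e, z)) < d1 \<Longrightarrow>
     N m (Df q' w' - Df p (e, z)) < \<epsilon> / 2"
    using Df_cont[OF pU, of "(e, z)" "\<epsilon> / 2"] zL ep by auto
  have xW: "x \<in> W (Suc m)" using W'_W x by blast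
  obtain d2 where d2: "d2 > 0" "\<And>y. y \<in> W (Suc m) \<Longrightarrow> norm (y - x) < d2 \<Longrightarrow> N (Suc m) (\<delta> y - \<delta> x) < d1 / 2"
    using d_cont[OF xW, of "d1 / 2"] d1(1) by auto
  show ?thesis
  proof (intro exI[of _ "min d2 (d1 / 2)"] conjI ballI impI)
    show "min d2 (d1 / 2) > 0" using d1 d2 by simp
  next
    fix y assume y: "y \<in> W' (Suc m)" "norm (y - x) < min d2 (d1 / 2)"
    define q where "q = (y, \<delta> y)"
    define z' where "z' = Z y e"
    have z'L: "z' \<in> L m" and z's: "Df q (e, z') = 0" using Z_spec[OF y(1)] by (auto simp: q_def z'_def)
    have qU: "q \<in> U (Suc m)" using W'_reg(1)[OF y(1)] by (simp add: q_def)
    have q1: "q \<in> U 1" using U1[OF qU] .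
    have yW: "y \<in> W (Suc m)" using W'_W y(1) by blast
    have dyL: "\<delta> y \<in> L (Suc m)" and dxL: "\<delta> x \<in> L (Suc m)" using dL yW xW by auto
    have "NA (Suc m) (q - p) \<le> norm (y - x) + N (Suc m) (\<delta> y - \<delta> x)"
      using NA_le[OF ln_diff[OF lnorm dyL dxL], of "y - x"] by (simp add: p_def q_def)
    also have "\<dots> < d1 / 2 + d1 / 2" using y(2) d2(2)[OF yW] by (intro add_strict_mono) auto
    finally have "NA (Suc m) (q - p) + NA m ((e, z) - (e, z)) < d1"
      using ln_0[OF lnorm] by (simp add: sum_norms_def const_norms_def)
    hence c: "N m (Df q (e, z) - Df p (e, z)) < \<epsilon> / 2" using d1(2)[of q "(e,z)"] qU zL by auto
    have dzL: "z' - z \<in> L m" using ln_diff[OF lnorm z'L zL] .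
    have eq: "z' - z = Aop q (z' - z) + (Df p (e, z) - Df q (e, z))"
    proof -
      have "Df q (0, z' - z) = Df q (0, z') - Df q (0, z)" using Df_lin_ops(1)[OF q1] by simp
      also have "\<dots> = (Df q (e, 0) + Df q (0, z')) - (Df q (e, 0) + Df q (0, z))" by simp
      also have "\<dots> = Df q (e, z') - Df q (e, z)" using Df_pair[OF q1, of e z'] Df_pair[OF q1, of e z] by simp
      also have "\<dots> = Df p (e, z) - Df q (e, z)" using z's zs by simp
      finally show ?thesis by (simp add: Aop_def)
    qed
    have l1: "Df p (e, z) \<in> L m" "Df q (e, z) \<in> L m" using Df_L[OF pU, of "(e,z)"] Df_L[OF qU, of "(e,z)"] zL by auto
    have "N m (z' - z) \<le> N m (Aop q (z' - z)) + N m (Df p (e, z) - Df q (e, z))"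
      using ln_tri[OF lnorm Aop_L[OF qU dzL] ln_diff[OF lnorm l1]] eq by simp
    also have "\<dots> \<le> 1/2 * N m (z' - z) + N m (Df q (e, z) - Df p (e, z))"
      using A_bound[OF W'_reg[OF y(1)] dzL] ln_sym[OF lnorm l1] by (simp add: q_def)
    finally have "N m (z' - z) \<le> 1/2 * N m (z' - z) + N m (Df q (e, z) - Df p (e, z))" .
    thus "N m (Z y e - Z x e) < \<epsilon>" using c by (simp add: z_def z'_def)
  qed
qed


lemma Dd_cont: assumes x: "x \<in> W' (Suc m)" and ep: "\<epsilon> > 0"
  shows "\<exists>d>0. \<forall>y g. y \<in> W' (Suc m) \<and> norm (y - x) < d \<and> norm (g - h) < d \<longrightarrow> N m (Dd y g - Dd x h) < \<epsilon>"
proof -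
  define e where "e i = (axis i 1 :: real^'n)" for i
  define H where "H = norm h + 1"
  define n where "n = real CARD('n)"
  define M where "M = (\<Sum>i\<in>UNIV. N m (Z x (e i)))"
  define \<eta> where "\<eta> = \<epsilon> / (2 * n * H)"
  have Hp: "H > 0" unfolding H_def by (simp add: add_nonneg_pos)
  have np: "n > 0" by (simp add: n_def)
  have etap: "\<eta> > 0" using ep Hp np by (simp add: \<eta>_def)
  have ZxL: "Z x (e i) \<in> L m" for i using Z_spec(1)[OF x] .
  have M0: "M \<ge> 0" unfolding M_def using ln_nonneg[OF lnorm ZxL] by (simp add: sum_nonneg)
  have "\<forall>i. \<exists>d. d > 0 \<and> (\<forall>y\<in>W' (Suc m). norm (y - x) < d \<longrightarrow> N m (Z y (e i) - Z x (e i)) < \<eta>)"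
    using Z_cont[OF x etap] by blast
  then obtain dd where dd: "\<And>i. dd i > 0" "\<And>i y. y \<in> W' (Suc m) \<Longrightarrow> norm (y - x) < dd i \<Longrightarrow> N m (Z y (e i) - Z x (e i)) < \<eta>"
    by metis
  define d0 where "d0 = Min (range dd)"
  have d0p: "d0 > 0" unfolding d0_def using dd(1) by (subst Min_gr_iff) auto
  have d0le: "d0 \<le> dd i" for i unfolding d0_def by (rule Min_le) auto
  define d where "d = min 1 (min d0 (\<epsilon> / (2 * (M + 1))))"
  have dp: "d > 0" using d0p ep M0 by (simp add: d_def)
  show ?thesis
  proof (intro exI[of _ d] conjI dp allI impI)
    fix y g assume yg: "y \<in> W' (Suc m) \<and> norm (y - x) < d \<and> norm (g - h) < d"
    have y: "y \<in> W' (Suc m)" using yg by simp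
    have ZyL: "Z y (e i) \<in> L m" for i using Z_spec(1)[OF y] .
    define t where "t i = g $ i *\<^sub>R (Z y (e i) - Z x (e i)) + (g $ i - h $ i) *\<^sub>R Z x (e i)" for i
    have tL: "t i \<in> L m" for i
      unfolding t_def using ln_add[OF lnorm ln_scale(1)[OF lnorm ln_diff[OF lnorm ZyL ZxL]] ln_scale(1)[OF lnorm ZxL]] .
    have "Dd y g - Dd x h = (\<Sum>i\<in>UNIV. g $ i *\<^sub>R Z y (e i) - h $ i *\<^sub>R Z x (e i))"
      by (simp add: Dd_def sum_subtractf e_def)
    also have "\<dots> = (\<Sum>i\<in>UNIV. t i)" by (rule sum.cong) (auto simp: t_def algebra_simps)
    finally have eqs: "Dd y g - Dd x h = (\<Sum>i\<in>UNIV. t i)" .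
    have gi: "\<bar>g $ i\<bar> \<le> H" for i
    proof -
      have "\<bar>g $ i\<bar> \<le> norm g" by (rule component_le_norm_cart)
      also have "\<dots> \<le> norm h + norm (g - h)" using norm_triangle_sub[of g h] by simp
      also have "\<dots> \<le> H" using yg by (simp add: H_def d_def)
      finally show ?thesis .
    qed
    have gh: "\<bar>g $ i - h $ i\<bar> \<le> d" for i
      using component_le_norm_cart[of "g - h" i] yg by simp
    have ti: "N m (t i) \<le> H * \<eta> + d * N m (Z x (e i))" for i
    proof -
      have "N m (t i) \<le> N m (g $ i *\<^sub>R (Z y (e i) - Z x (e i))) + N m ((g $ i - h $ i) *\<^sub>R Z x (e i))"
        unfolding t_def by (rule ln_tri[OF lnorm ln_scale(1)[OF lnorm ln_diff[OF lnorm ZyL ZxL]] ln_scale(1)[OF lnorm ZxL]])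
      also have "\<dots> = \<bar>g $ i\<bar> * N m (Z y (e i) - Z x (e i)) + \<bar>g $ i - h $ i\<bar> * N m (Z x (e i))"
        using ln_scale(2)[OF lnorm ln_diff[OF lnorm ZyL ZxL]] ln_scale(2)[OF lnorm ZxL] by simp
      also have "\<dots> \<le> H * \<eta> + d * N m (Z x (e i))"
      proof (rule add_mono)
        have "N m (Z y (e i) - Z x (e i)) < \<eta>" using dd(2)[OF y] yg d0le[of i] by (simp add: d_def)
        thus "\<bar>g $ i\<bar> * N m (Z y (e i) - Z x (e i)) \<le> H * \<eta>"
          using gi[of i] ln_nonneg[OF lnorm ln_diff[OF lnorm ZyL ZxL]] by (intro mult_mono) auto
        show "\<bar>g $ i - h $ i\<bar> * N m (Z x (e i)) \<le> d * N m (Z x (e i))"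
          using gh[of i] ln_nonneg[OF lnorm ZxL] by (intro mult_right_mono) auto
      qed
      finally show ?thesis .
    qed
    have "N m (Dd y g - Dd x h) \<le> (\<Sum>i\<in>UNIV. N m (t i))" unfolding eqs using ln_sum[OF lnorm, of UNIV t] tL by simp
    also have "\<dots> \<le> (\<Sum>i\<in>UNIV. H * \<eta> + d * N m (Z x (e i)))" by (rule sum_mono) (rule ti)
    also have "\<dots> = n * H * \<eta> + d * M" by (simp add: sum.distrib sum_distrib_left M_def n_def)
    also have "\<dots> = \<epsilon> / 2 + d * M" using np Hp by (simp add: \<eta>_def)
    also have "\<dots> < \<epsilon>"
    proof -
      have "d * M \<le> (\<epsilon> / (2 * (M + 1))) * M" using M0 by (intro mult_right_mono) (auto simp: d_def)
      also have "\<dots> < \<epsilon> / 2" using M0 ep by (simp add: field_simps)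
      finally show ?thesis by simp
    qed
    finally show "N m (Dd y g - Dd x h) < \<epsilon>" .
  qed
qed

end



context S23 begin

lemma Dd_pair: "(h, Dd x h) = (\<Sum>i\<in>UNIV. (h $ i) *\<^sub>R (axis i 1, Z x (axis i 1)))"
proof (rule prod_eqI)
  have hexp: "h = (\<Sum>i\<in>UNIV. (h $ i) *\<^sub>R axis i 1)" using basis_expansion[of h] by (simp add: scalar_mult_eq_scaleR)
  show "fst (h, Dd x h) = fst (\<Sum>i\<in>UNIV. (h $ i) *\<^sub>R (axis i 1, Z x (axis i 1)))"
    using hexp by (simp add: fst_sum)
  show "snd (h, Dd x h) = snd (\<Sum>i\<in>UNIV. (h $ i) *\<^sub>R (axis i 1, Z x (axis i 1)))"
    by (simp add: snd_sum Dd_def)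
qed

lemma NA_scale: "k \<in> L j \<Longrightarrow> NA j (c *\<^sub>R (h, k)) = \<bar>c\<bar> * NA j (h, k)"
proof -
  assume k: "k \<in> L j"
  have "NA j (c *\<^sub>R (h, k)) = sqrt (c\<^sup>2 * ((norm h)\<^sup>2 + (N j k)\<^sup>2))"
    using ln_scale(2)[OF lnorm k, of c] by (simp add: NA_eq power_mult_distrib algebra_simps)
  also have "\<dots> = \<bar>c\<bar> * NA j (h, k)" by (simp add: NA_eq real_sqrt_mult)
  finally show ?thesis .
qed

lemma NA_pos: "h \<noteq> 0 \<Longrightarrow> NA j (h, k) > 0"
  by (simp add: NA_eq add_pos_nonneg)

lemma conv_N: assumes "a \<in> L j" "b \<in> L j" "0 \<le> t" "t \<le> 1" "N j a < c" "N j b < c"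
  shows "a + t *\<^sub>R (b - a) \<in> L j" "N j (a + t *\<^sub>R (b - a)) < c"
proof -
  have eq: "a + t *\<^sub>R (b - a) = (1 - t) *\<^sub>R a + t *\<^sub>R b" by (simp add: algebra_simps)
  have l1: "(1 - t) *\<^sub>R a \<in> L j" "t *\<^sub>R b \<in> L j" using ln_scale(1)[OF lnorm] assms by auto
  show "a + t *\<^sub>R (b - a) \<in> L j" unfolding eq using ln_add[OF lnorm l1] .
  have "N j ((1 - t) *\<^sub>R a + t *\<^sub>R b) \<le> (1 - t) * N j a + t * N j b"
    using ln_tri[OF lnorm l1] ln_scale(2)[OF lnorm assms(1), of "1 - t"] ln_scale(2)[OF lnorm assms(2), of t] assms(3,4)
    by simp
  also have "\<dots> < c"
  proof (cases "t = 0")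
    case True thus ?thesis using assms by simp
  next
    case False
    have "(1 - t) * N j a \<le> (1 - t) * c" using assms by (intro mult_left_mono) auto
    moreover have "t * N j b < t * c" using assms False by (intro mult_strict_left_mono) auto
    ultimately show ?thesis by (simp add: algebra_simps)
  qed
  finally show "N j (a + t *\<^sub>R (b - a)) < c" unfolding eq .
qed

lemma conv_norm: assumes "0 \<le> t" "t \<le> 1" "norm (a::real^'n) < c" "norm b < c"
  shows "norm (a + t *\<^sub>R (b - a)) < c"
proof -
  have eq: "a + t *\<^sub>R (b - a) = (1 - t) *\<^sub>R a + t *\<^sub>R b" by (simp add: algebra_simps)
  have "norm ((1 - t) *\<^sub>R a + t *\<^sub>R b) \<le> (1 - t) * norm a + t * norm b"
    using norm_triangle_ineq[of "(1 - t) *\<^sub>R a" "t *\<^sub>R b"] assms(1,2) by simp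
  also have "\<dots> < c"
  proof (cases "t = 0")
    case True thus ?thesis using assms by simp
  next
    case False
    have "(1 - t) * norm a \<le> (1 - t) * c" using assms by (intro mult_left_mono) auto
    moreover have "t * norm b < t * c" using assms False by (intro mult_strict_left_mono) auto
    ultimately show ?thesis by (simp add: algebra_simps)
  qed
  finally show ?thesis unfolding eq .
qed

lemma conv_Q: assumes "0 \<le> t" "t \<le> 1" "a \<in> Q" "b \<in> Q" shows "a + t *\<^sub>R (b - a) \<in> Q"
proof -
  have "(1 - t) *\<^sub>R a + t *\<^sub>R b \<in> Q" using quadrant_convex assms unfolding convex_def by auto
  thus ?thesis by (simp add: algebra_simps)
qed


lemma Df_sum_diff: assumes q: "q \<in> U 1" and p: "p \<in> U 1"
  shows "Df q (h, Dd x h) - Df p (h, Dd x h) =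
     (\<Sum>i\<in>UNIV. (h $ i) *\<^sub>R (Df q (axis i 1, Z x (axis i 1)) - Df p (axis i 1, Z x (axis i 1))))"
proof -
  have lq: "linear (Df q)" using bounded_linear.linear[OF Df_lin[OF q]] .
  have lp: "linear (Df p)" using bounded_linear.linear[OF Df_lin[OF p]] .
  have "Df q (h, Dd x h) = (\<Sum>i\<in>UNIV. Df q ((h $ i) *\<^sub>R (axis i 1, Z x (axis i 1))))"
    unfolding Dd_pair[of h x] by (rule linear_sum[OF lq])
  also have "\<dots> = (\<Sum>i\<in>UNIV. (h $ i) *\<^sub>R Df q (axis i 1, Z x (axis i 1)))"
    by (simp only: Df_lin_ops(7)[OF q])
  finally have eq: "Df q (h, Dd x h) = (\<Sum>i\<in>UNIV. (h $ i) *\<^sub>R Df q (axis i 1, Z x (axis i 1)))" .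
  have "Df p (h, Dd x h) = (\<Sum>i\<in>UNIV. Df p ((h $ i) *\<^sub>R (axis i 1, Z x (axis i 1))))"
    unfolding Dd_pair[of h x] by (rule linear_sum[OF lp])
  also have "\<dots> = (\<Sum>i\<in>UNIV. (h $ i) *\<^sub>R Df p (axis i 1, Z x (axis i 1)))"
    by (simp only: Df_lin_ops(7)[OF p])
  finally have ep: "Df p (h, Dd x h) = (\<Sum>i\<in>UNIV. (h $ i) *\<^sub>R Df p (axis i 1, Z x (axis i 1)))" .
  show ?thesis unfolding eq ep by (simp add: sum_subtractf scaleR_diff_right)
qed

lemma Dd_deriv: assumes x: "x \<in> W' (Suc 0)" and ep: "\<epsilon> > 0"
  shows "\<exists>d>0. \<forall>h. x + h \<in> W' (Suc 0) \<and> 0 < norm h \<and> norm h < d \<longrightarrow>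
           norm (\<delta> (x + h) - \<delta> x - Dd x h) \<le> \<epsilon> * norm h"
proof -
  define p where "p = (x, \<delta> x)"
  define w where "w i = (axis i 1 :: real^'n, Z x (axis i 1))" for i
  define n where "n = real CARD('n)"
  define \<eta> where "\<eta> = \<epsilon> / (2 * n)"
  have np: "n > 0" by (simp add: n_def)
  have etap: "\<eta> > 0" using ep np by (simp add: \<eta>_def)
  have pU: "p \<in> U (Suc 0)" using W'_reg(1)[OF x] by (simp add: p_def)
  have p1: "p \<in> U 1" using pU by simp
  have "\<forall>i. \<exists>d. d > 0 \<and> (\<forall>q'. q' \<in> U (Suc 0) \<and> NA (Suc 0) (q' - p) < d \<longrightarrow> norm (Df q' (w i) - Df p (w i)) < \<eta>)"
  proof
    fix i
    obtain d where d: "d > 0" "\<And>q' w'. q' \<in> U (Suc 0) \<and> snd w' \<in> L 0 \<and> NA (Suc 0) (q' - p) + NA 0 (w' - w i) < d \<Longrightarrow>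
       N 0 (Df q' w' - Df p (w i)) < \<eta>"
      using Df_cont[OF pU, of "w i" \<eta>] etap by (auto simp: L0)
    have NA00: "NA 0 (w i - w i) = 0" using ln_0[OF lnorm] by (simp add: sum_norms_def const_norms_def)
    show "\<exists>d. d > 0 \<and> (\<forall>q'. q' \<in> U (Suc 0) \<and> NA (Suc 0) (q' - p) < d \<longrightarrow> norm (Df q' (w i) - Df p (w i)) < \<eta>)"
    proof (intro exI[of _ d] conjI allI impI d(1))
      fix q' assume "q' \<in> U (Suc 0) \<and> NA (Suc 0) (q' - p) < d"
      thus "norm (Df q' (w i) - Df p (w i)) < \<eta>" using d(2)[of q' "w i"] NA00 by (simp add: L0 N0)
    qed
  qed
  then obtain dd where dd: "\<And>i. dd i > 0"
    "\<And>i q'. q' \<in> U (Suc 0) \<Longrightarrow> NA (Suc 0) (q' - p) < dd i \<Longrightarrow> norm (Df q' (w i) - Df p (w i)) < \<eta>"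
    by metis
  define d0 where "d0 = Min (range dd)"
  have d0p: "d0 > 0" unfolding d0_def using dd(1) by (subst Min_gr_iff) auto
  have d0le: "d0 \<le> dd i" for i unfolding d0_def by (rule Min_le) auto
  have xW: "x \<in> W (Suc 0)" using W'_W x by blast
  obtain d1 where d1: "d1 > 0" "\<And>y. y \<in> W (Suc 0) \<Longrightarrow> norm (y - x) < d1 \<Longrightarrow> N (Suc 0) (\<delta> y - \<delta> x) < d0 / 2"
    using d_cont[OF xW, of "d0 / 2"] d0p by auto
  show ?thesis
  proof (intro exI[of _ "min d1 (d0 / 2)"] conjI allI impI)
    show "min d1 (d0 / 2) > 0" using d1 d0p by simp
  next
    fix h assume hh: "x + h \<in> W' (Suc 0) \<and> 0 < norm h \<and> norm h < min d1 (d0 / 2)"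
    define y where "y = x + h"
    have y: "y \<in> W' (Suc 0)" using hh by (simp add: y_def)
    have hy: "h = y - x" by (simp add: y_def)
    have yW: "y \<in> W (Suc 0)" using W'_W y by blast
    define k where "k = \<delta> y - \<delta> x"
    define \<Delta> where "\<Delta> = Dd x h"
    have bx: "x \<in> Q" "\<delta> x \<in> L 1" "norm x < s 1" "N 1 (\<delta> x) < s 1" using W'_box[OF x] by auto
    have by': "y \<in> Q" "\<delta> y \<in> L 1" "norm y < s 1" "N 1 (\<delta> y) < s 1" using W'_box[OF y] by auto
    have kL: "k \<in> L 1" unfolding k_def using ln_diff[OF lnorm by'(2) bx(2)] .
    have Nk: "N 1 k < d0 / 2" using d1(2)[OF yW] hh by (simp add: k_def y_def)
    have h0: "h \<noteq> 0" using hh by auto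
    define pt where "pt t = p + t *\<^sub>R (h, k)" for t
    have pt_eq: "pt t = (x + t *\<^sub>R (y - x), \<delta> x + t *\<^sub>R (\<delta> y - \<delta> x))" for t
      by (simp add: pt_def p_def hy k_def)
    have ptU: "pt t \<in> U 1" and ptr1: "NA 1 (pt t) < r 1" and ptr0: "NA 0 (pt t) < r 0"
      and ptd: "NA 1 (pt t - p) < d0" if t: "0 \<le> t" "t \<le> 1" for t
    proof -
      have a: "x + t *\<^sub>R (y - x) \<in> Q" using conv_Q[OF t bx(1) by'(1)] .
      have b: "norm (x + t *\<^sub>R (y - x)) < s 1" using conv_norm[OF t bx(3) by'(3)] .
      have c: "\<delta> x + t *\<^sub>R (\<delta> y - \<delta> x) \<in> L 1" "N 1 (\<delta> x + t *\<^sub>R (\<delta> y - \<delta> x)) < s 1"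
        using conv_N[OF bx(2) by'(2) t bx(4) by'(4)] by auto
      show "pt t \<in> U 1" unfolding pt_eq using box1_U[OF a c(1) b c(2)] .
      show "NA 1 (pt t) < r 1" unfolding pt_eq using box_r[OF c(1) b c(2)] .
      show "NA 0 (pt t) < r 0" unfolding pt_eq using box1_r0[OF c(1) b c(2)] .
      have "NA 1 (pt t - p) = t * NA 1 (h, k)" using NA_scale[OF kL, of t h] t by (simp add: pt_def)
      also have "\<dots> \<le> NA 1 (h, k)" using t NA_pos[OF h0, of 1 k] by (simp add: mult_left_le_one_le)
      also have "\<dots> \<le> norm h + N 1 k" using NA_le[OF kL] .
      also have "\<dots> < d0 / 2 + d0 / 2" using hh Nk by (intro add_strict_mono) auto
      finally show "NA 1 (pt t - p) < d0" by simp
    qed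
    define \<psi> where "\<psi> t = f (pt t) - t *\<^sub>R (k - \<Delta>)" for t
    define \<psi>' where "\<psi>' t = Df (pt t) (h, k) - (k - \<Delta>)" for t
    have deriv: "(\<psi> has_derivative (\<lambda>s. s *\<^sub>R \<psi>' t)) (at t within {0..1})" if t: "t \<in> {0..1}" for t
      unfolding has_derivative_within_alt
    proof (intro conjI allI impI bounded_linear_scaleR_left)
      fix \<epsilon>' :: real assume ep': "\<epsilon>' > 0"
      define c where "c = NA 1 (h, k)"
      have cp: "c > 0" unfolding c_def using NA_pos[OF h0] .
      have tU: "pt t \<in> U 1" using ptU t by auto
      obtain d' where d': "d' > 0" "\<And>g. pt t + g \<in> U 1 \<and> 0 < NA 1 g \<and> NA 1 g < d' \<Longrightarrow>
               norm (f (pt t + g) - f (pt t) - Df (pt t) g) \<le> (\<epsilon>' / c) * NA 1 g"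
        using Df_deriv[OF tU, of "\<epsilon>' / c"] ep' cp by auto
      show "\<exists>d>0. \<forall>t'\<in>{0..1}. norm (t' - t) < d \<longrightarrow>
          norm (\<psi> t' - \<psi> t - (t' - t) *\<^sub>R \<psi>' t) \<le> \<epsilon>' * norm (t' - t)"
      proof (intro exI[of _ "d' / c"] conjI ballI impI)
        show "d' / c > 0" using d' cp by simp
      next
        fix t' assume t': "t' \<in> {0..1}" "norm (t' - t) < d' / c"
        show "norm (\<psi> t' - \<psi> t - (t' - t) *\<^sub>R \<psi>' t) \<le> \<epsilon>' * norm (t' - t)"
        proof (cases "t' = t")
          case True thus ?thesis by simp
        next
          case False
          define g where "g = (t' - t) *\<^sub>R (h, k)"
          have ptg: "pt t + g = pt t'" by (simp add: pt_def g_def algebra_simps)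
          have NAg: "NA 1 g = \<bar>t' - t\<bar> * c" using NA_scale[OF kL] by (simp add: g_def c_def)
          have pre: "pt t + g \<in> U 1 \<and> 0 < NA 1 g \<and> NA 1 g < d'"
          proof (intro conjI)
            show "pt t + g \<in> U 1" unfolding ptg using ptU t' by auto
            show "0 < NA 1 g" unfolding NAg using False cp by simp
            show "NA 1 g < d'" unfolding NAg using t'(2) cp by (simp add: field_simps)
          qed
          have eq: "\<psi> t' - \<psi> t - (t' - t) *\<^sub>R \<psi>' t = f (pt t + g) - f (pt t) - Df (pt t) g"
            unfolding ptg using Df_lin_ops(7)[OF tU, of "t' - t" "(h, k)"]
            by (simp add: \<psi>_def \<psi>'_def g_def algebra_simps)
          have "norm (f (pt t + g) - f (pt t) - Df (pt t) g) \<le> (\<epsilon>' / c) * NA 1 g" using d'(2)[OF pre] .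
          also have "\<dots> = \<epsilon>' * norm (t' - t)" unfolding NAg using cp by simp
          finally show ?thesis unfolding eq .
        qed
      qed
    qed
    have kDL: "k - \<Delta> \<in> L 0" by (simp add: L0)
    have bound: "onorm (\<lambda>s. s *\<^sub>R \<psi>' t) \<le> \<epsilon> / 2 * norm h + 1/2 * norm (k - \<Delta>)" if t: "t \<in> {0..1}" for t
    proof -
      have on: "onorm (\<lambda>s::real. s *\<^sub>R \<psi>' t) = norm (\<psi>' t)"
        using onorm_scaleR_left[OF bounded_linear_ident, of "\<psi>' t"] onorm_id[where 'a=real] by simp
      define q where "q = pt t"
      have qU: "q \<in> U (Suc 0)" using ptU t by (simp add: q_def)
      have q1: "q \<in> U 1" using qU by simp
      have qr: "NA (Suc 0) q < r (Suc 0)" "NA 0 q < r 0" using ptr1 ptr0 t by (auto simp: q_def)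
      have e1: "\<psi>' t = Df q (h, \<Delta>) - Aop q (k - \<Delta>)"
      proof -
        have "Df q (h, k) = Df q (h, \<Delta>) + Df q (0, k - \<Delta>)"
          using Df_lin_ops(5)[OF q1, of "(h, \<Delta>)" "(0, k - \<Delta>)"] by simp
        thus ?thesis by (simp add: \<psi>'_def q_def Aop_def)
      qed
      have A: "norm (Aop q (k - \<Delta>)) \<le> 1/2 * norm (k - \<Delta>)"
        using A_bound[OF qU qr kDL] by (simp add: N0)
      have D: "norm (Df q (h, \<Delta>)) \<le> \<epsilon> / 2 * norm h"
      proof -
        have pz: "Df p (h, \<Delta>) = 0" using Dd_eq[OF x] by (simp add: p_def \<Delta>_def)
        have "norm (Df q (h, \<Delta>)) = norm (Df q (h, \<Delta>) - Df p (h, \<Delta>))" using pz by simp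
        also have "\<dots> = norm (\<Sum>i\<in>UNIV. (h $ i) *\<^sub>R (Df q (w i) - Df p (w i)))"
          using Df_sum_diff[OF q1 p1, of h x] by (simp add: \<Delta>_def w_def)
        also have "\<dots> \<le> (\<Sum>i\<in>UNIV. norm ((h $ i) *\<^sub>R (Df q (w i) - Df p (w i))))" by (rule norm_sum)
        also have "\<dots> \<le> (\<Sum>i\<in>(UNIV::'n set). norm h * \<eta>)"
        proof -
          have each: "norm ((h $ i) *\<^sub>R (Df q (w i) - Df p (w i))) \<le> norm h * \<eta>" for i
          proof -
            have "norm (Df q (w i) - Df p (w i)) < \<eta>"
              using dd(2)[OF qU] ptd[of t] t d0le[of i] by (auto simp: q_def)
            hence "\<bar>h $ i\<bar> * norm (Df q (w i) - Df p (w i)) \<le> norm h * \<eta>"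
              using component_le_norm_cart[of h i] by (intro mult_mono) auto
            thus ?thesis by simp
          qed
          show ?thesis by (intro sum_mono each)
        qed
        also have "\<dots> = \<epsilon> / 2 * norm h" using np by (simp add: \<eta>_def n_def)
        finally show ?thesis .
      qed
      have "norm (\<psi>' t) \<le> norm (Df q (h, \<Delta>)) + norm (Aop q (k - \<Delta>))" unfolding e1 by (rule norm_triangle_ineq4)
      thus ?thesis using A D on by linarith
    qed
    have mvt: "norm (\<psi> 1 - \<psi> 0) \<le> (\<epsilon> / 2 * norm h + 1/2 * norm (k - \<Delta>)) * norm (1 - (0::real))"
      by (rule differentiable_bound[OF convex_real_interval(5) deriv bound]) auto
    have f1: "f (pt 1) = 0" using sol W'_W[of "Suc 0"] W_mono[of 0 "Suc 0"] y by (auto simp: pt_eq)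
    have f0: "f (pt 0) = 0" using sol W'_W[of "Suc 0"] W_mono[of 0 "Suc 0"] x by (auto simp: pt_eq)
    have "\<psi> 1 - \<psi> 0 = - (k - \<Delta>)" by (simp add: \<psi>_def f1 f0)
    hence "norm (k - \<Delta>) \<le> \<epsilon> / 2 * norm h + 1/2 * norm (k - \<Delta>)" using mvt norm_minus_commute[of k \<Delta>] by simp
    hence "norm (k - \<Delta>) \<le> \<epsilon> * norm h" by simp
    thus "norm (\<delta> (x + h) - \<delta> x - Dd x h) \<le> \<epsilon> * norm h" by (simp add: k_def \<Delta>_def y_def)
  qed
qed

end



context S23 begin

lemma main_sc1: "sc1_germ const_levels const_norms Q W' L N \<delta>"
proof -
  have ng: "nbhd_germ const_levels const_norms Q W'"
    unfolding nbhd_germ_def const_levels_def const_norms_def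
    using W'_Suc W'_Q W'_0 W'_open by auto
  have sm: "sc0_map const_norms W' L N \<delta>"
    unfolding sc0_map_def const_norms_def
  proof (intro conjI allI ballI impI)
    show "\<delta> 0 = 0" by (rule d0)
  next
    fix m show "\<delta> ` W' m \<subseteq> L m" using W'_W dL by blast
  next
    fix m x and e :: real assume x: "x \<in> W' m" and e: "e > 0"
    obtain d where "d > 0" "\<forall>y\<in>W m. norm (y - x) < d \<longrightarrow> N m (\<delta> y - \<delta> x) < e"
      using d_cont[of x m e] W'_W x e by blast
    thus "\<exists>d>0. \<forall>y\<in>W' m. norm (y - x) < d \<longrightarrow> N m (\<delta> y - \<delta> x) < e" using W'_W by blast
  qed
  have img: "(\<lambda>(x, h). (\<delta> x, Dd x h)) ` (W' (Suc m) \<times> (const_levels m :: (real^'n) set)) \<subseteq> tan_levels L m" for m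
  proof
    fix z assume "z \<in> (\<lambda>(x, h). (\<delta> x, Dd x h)) ` (W' (Suc m) \<times> const_levels m)"
    then obtain x h where xh: "x \<in> W' (Suc m)" "z = (\<delta> x, Dd x h)" by auto
    have "\<delta> x \<in> L (Suc m)" using dL W'_W xh(1) by blast
    thus "z \<in> tan_levels L m" using Dd_L[OF xh(1)] xh(2) by (simp add: tan_levels_def)
  qed
  have tc: "sc0_map (tan_norms const_norms) (\<lambda>m. W' (Suc m) \<times> const_levels m) (tan_levels L) (tan_norms N)
           (\<lambda>(x, h). (\<delta> x, Dd x h))"
    unfolding sc0_map_def
  proof (intro conjI allI ballI impI)
    show "(\<lambda>(x, h). (\<delta> x, Dd x h)) 0 = 0" by (simp add: zero_prod_def d0 Dd_0)
  next
    fix m show "(\<lambda>(x, h). (\<delta> x, Dd x h)) ` (W' (Suc m) \<times> const_levels m) \<subseteq> tan_levels L m" by (rule img)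
  next
    fix m and p :: "(real^'n) \<times> (real^'n)" and e :: real assume p: "p \<in> W' (Suc m) \<times> const_levels m" and e: "e > 0"
    obtain x h where pxh: "p = (x, h)" by (cases p)
    have x: "x \<in> W' (Suc m)" using p pxh by auto
    have xW: "x \<in> W (Suc m)" using W'_W x by blast
    obtain d1 where d1: "d1 > 0" "\<And>y. y \<in> W (Suc m) \<Longrightarrow> norm (y - x) < d1 \<Longrightarrow> N (Suc m) (\<delta> y - \<delta> x) < e / 2"
      using d_cont[OF xW, of "e / 2"] e by auto
    obtain d2 where d2: "d2 > 0" "\<And>y g. y \<in> W' (Suc m) \<and> norm (y - x) < d2 \<and> norm (g - h) < d2 \<Longrightarrow> N m (Dd y g - Dd x h) < e / 2"
      using Dd_cont[OF x, of "e / 2" h] e by auto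
    show "\<exists>d>0. \<forall>p'\<in>W' (Suc m) \<times> const_levels m. tan_norms const_norms m (p' - p) < d \<longrightarrow>
        tan_norms N m ((\<lambda>(x, h). (\<delta> x, Dd x h)) p' - (\<lambda>(x, h). (\<delta> x, Dd x h)) p) < e"
    proof (intro exI[of _ "min d1 d2"] conjI ballI impI)
      show "min d1 d2 > 0" using d1 d2 by simp
    next
      fix p' :: "(real^'n) \<times> (real^'n)" assume p': "p' \<in> W' (Suc m) \<times> const_levels m" and pd: "tan_norms const_norms m (p' - p) < min d1 d2"
      obtain y g where pyg: "p' = (y, g)" by (cases p')
      have y: "y \<in> W' (Suc m)" using p' pyg by auto
      have yW: "y \<in> W (Suc m)" using W'_W y by blast
      have tn: "tan_norms const_norms m (p' - p) = sqrt ((norm (y - x))\<^sup>2 + (norm (g - h))\<^sup>2)"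
        by (simp add: tan_norms_def const_norms_def pyg pxh)
      have s1: "norm (y - x) \<le> sqrt ((norm (y - x))\<^sup>2 + (norm (g - h))\<^sup>2)" by (rule le_sqrt1) simp
      have s2: "norm (g - h) \<le> sqrt ((norm (y - x))\<^sup>2 + (norm (g - h))\<^sup>2)" by (rule le_sqrt2) simp
      have n1: "norm (y - x) < min d1 d2" using pd tn s1 by linarith
      have n2: "norm (g - h) < min d1 d2" using pd tn s2 by linarith
      have a: "N (Suc m) (\<delta> y - \<delta> x) < e / 2" using d1(2)[OF yW] n1 by simp
      have b: "N m (Dd y g - Dd x h) < e / 2" using d2(2)[of y g] y n1 n2 by simp
      have dyL: "\<delta> y - \<delta> x \<in> L (Suc m)" using ln_diff[OF lnorm] dL xW yW by blast
      have ddL: "Dd y g - Dd x h \<in> L m" using ln_diff[OF lnorm Dd_L[OF y] Dd_L[OF x]] .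
      have "tan_norms N m ((\<lambda>(x, h). (\<delta> x, Dd x h)) p' - (\<lambda>(x, h). (\<delta> x, Dd x h)) p)
          = sqrt ((N (Suc m) (\<delta> y - \<delta> x))\<^sup>2 + (N m (Dd y g - Dd x h))\<^sup>2)"
        by (simp add: tan_norms_def pyg pxh)
      also have "\<dots> \<le> N (Suc m) (\<delta> y - \<delta> x) + N m (Dd y g - Dd x h)"
        by (rule sqrt_le_add) (use ln_nonneg[OF lnorm dyL] ln_nonneg[OF lnorm ddL] in auto)
      also have "\<dots> < e" using a b by simp
      finally show "tan_norms N m ((\<lambda>(x, h). (\<delta> x, Dd x h)) p' - (\<lambda>(x, h). (\<delta> x, Dd x h)) p) < e" .
    qed
  qed
  have der: "\<forall>x\<in>W' 1. bounded_linear (Dd x) \<and>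
           (\<forall>e>0. \<exists>d>0. \<forall>h. x + h \<in> W' 1 \<and> 0 < const_norms 1 h \<and> const_norms 1 h < d \<longrightarrow>
               norm (\<delta> (x + h) - \<delta> x - Dd x h) \<le> e * const_norms 1 h)"
  proof (intro ballI allI impI conjI Dd_bl)
    fix x and e :: real assume x: "x \<in> W' 1" and e: "e > 0"
    have x': "x \<in> W' (Suc 0)" using x by simp
    show "\<exists>d>0. \<forall>h. x + h \<in> W' 1 \<and> 0 < const_norms 1 h \<and> const_norms 1 h < d \<longrightarrow>
               norm (\<delta> (x + h) - \<delta> x - Dd x h) \<le> e * const_norms 1 h"
      using Dd_deriv[OF x' e] by (simp add: const_norms_def)
  qed
  show ?thesis unfolding sc1_germ_def sc0_germ_def
    using ng sm der img tc by blast
qed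

end

theorem theorem2p3:
  fixes L :: "nat \<Rightarrow> 'e::banach set" and N :: "nat \<Rightarrow> 'e \<Rightarrow> real"
    and I :: "'n::finite set"
    and U :: "nat \<Rightarrow> ((real ^ 'n) \<times> 'e) set" and f :: "(real ^ 'n) \<times> 'e \<Rightarrow> 'e"
    and W :: "nat \<Rightarrow> (real ^ 'n) set" and \<delta> :: "real ^ 'n \<Rightarrow> 'e"
  assumes "sc_banach L N"
    and "sc0_contraction_germ (quadrant I) L N U f"
    and "sc1_germ (sum_levels const_levels L) (sum_norms const_norms N) (quadrant I \<times> UNIV) U L N f"
    and "sc0_germ const_levels const_norms (quadrant I) W L N \<delta>"
    and "\<forall>v\<in>W 0. (v, \<delta> v) \<in> U 0 \<and> f (v, \<delta> v) = 0"
  shows "\<exists>W'. (\<forall>m. W' m \<subseteq> W m) \<and>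
           sc1_germ const_levels const_norms (quadrant I) W' L N \<delta>"
proof -
  interpret S: S23 L N I U f W \<delta> using assms by (unfold_locales) auto
  show ?thesis using S.main_sc1 S.W'_W by blast
qed



end
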